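(* Let $(P,Q)=(p_1,\dots,p_N,q_1,\dots,q_N)$ be a global solution of the Cucker–Smale model with velocity control described in the context. Then: (1) The following three statements are equivalent: (a) $(P,Q)$ exhibits flocking, i.e. $\sup_{t\ge0}D_Q(t)<\infty$ and $\lim_{t\to\infty}D_P(t)=0$; (b) $D_P$ decays exponentially, i.e. there exist constants $B,C>0$ with $D_P(t)\le Be^{-Ct}$ for all $t\ge0$; (c) the agents are spatially bounded, i.e. $\sup_{t\ge0}D_Q(t)<\infty$. (2) If \[ \|P^0\|<\frac{\mathcal M\kappa}{M_{G'}}\int_{\|Q^0\|}^{+\infty}\psi(s)\,ds, \] then $(P,Q)$ exhibits flocking. In particular, if $\|\psi\|_{L^1(\mathbb R_+)}=\infty$, then flocking occurs for every initial datum.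
   Context: Let $N\ge1$, $d\ge1$, $\kappa>0$, and write $[N]=\{1,\dots,N\}$, $\mathbb R_+=(0,\infty)$, $\mathbb R_{\ge0}=[0,\infty)$. The velocity control function $G:\mathbb R^d\to\mathbb R^d$ is $G(p)=g(|p|)\,p/|p|$ for $p\neq0$ and $G(0)=0$, where $g\in C^1(\mathbb R_{\ge0})$, $g(0)=0$, on every compact interval $g'$ satisfies $0<m\le g'\le M$ for some constants $m,M$ (depending on the interval), and $g$ is convex or concave on $\mathbb R_+$. The communication kernel $\psi:\mathbb R_+\to\mathbb R_+$ is bounded, Lipschitz continuous, and nonincreasing ($(\psi(r)-\psi(s))(r-s)\le0$ for all $r,s$). The model is the system of ODEs, for $i\in[N]$ and $t>0$, \[ \dot q_i=G(p_i),\qquad \dot p_i=\frac{\kappa}{N}\sum_{k=1}^N\psi(|q_k-q_i|)\big(G(p_k)-G(p_i)\big),\qquad (q_i,p_i)(0)=(q_i^0,p_i^0)\in\mathbb R^d\times\mathbb R^d. \] Notation: $P^0=(p_1^0,\dots,p_N^0)$, $Q^0=(q_1^0,\dots,q_N^0)$; $\|Q\|^2=\sum_{i,j\in[N]}|q_i-q_j|^2$, $\|P\|^2=\sum_{i,j\in[N]}|p_i-p_j|^2$; $D_Q(t)=\max_{i,j}|q_i(t)-q_j(t)|$, $D_P(t)=\max_{i,j}|p_i(t)-p_j(t)|$; $P^0_M=\max_i|p_i^0|$, $M_{G'}=\max\{g'(r):0\le r\le P^0_M\}$, $m_{G'}=\min\{g'(r):0\le r\le P^0_M\}$, and $\mathcal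 M=\min\{m_{G'},\,m_{G'}^2/M_{G'}\}$. *)

theory Defs
  imports "HOL-Analysis.Analysis"
begin

definition vel_ctrl :: "(real \<Rightarrow> real) \<Rightarrow> 'a::real_normed_vector \<Rightarrow> 'a" where
  "vel_ctrl g v = (if v = 0 then 0 else g (norm v) *\<^sub>R (v /\<^sub>R norm v))"

definition cfg_norm :: "nat \<Rightarrow> (nat \<Rightarrow> 'a::real_normed_vector) \<Rightarrow> real" where
  "cfg_norm N x = sqrt (\<Sum>i\<in>{1..N}. \<Sum>j\<in>{1..N}. (norm (x i - x j))\<^sup>2)"

definition cfg_diam :: "nat \<Rightarrow> (nat \<Rightarrow> 'a::real_normed_vector) \<Rightarrow> real" where
  "cfg_diam N x = Max {norm (x i - x j) | i j. i \<in> {1..N} \<and> j \<in> {1..N}}"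

definition CSVC_solution ::
  "nat \<Rightarrow> real \<Rightarrow> (real \<Rightarrow> real) \<Rightarrow> (real \<Rightarrow> real)
   \<Rightarrow> (nat \<Rightarrow> 'a::euclidean_space) \<Rightarrow> (nat \<Rightarrow> 'a)
   \<Rightarrow> (nat \<Rightarrow> real \<Rightarrow> 'a) \<Rightarrow> (nat \<Rightarrow> real \<Rightarrow> 'a) \<Rightarrow> bool" where
  "CSVC_solution N \<kappa> g \<psi> q0 p0 q p \<longleftrightarrow>
     (\<forall>i\<in>{1..N}.
        q i 0 = q0 i \<and> p i 0 = p0 i \<and>
        continuous_on {0..} (q i) \<and> continuous_on {0..} (p i) \<and>
        (\<forall>t>0. (q i has_vector_derivative vel_ctrl g (p i t)) (at t)) \<and>
        (\<forall>t>0. (p i has_vector_derivative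
                 (\<kappa> / real N) *\<^sub>R (\<Sum>k\<in>{1..N}. \<psi> (norm (q k t - q i t)) *\<^sub>R
                     (vel_ctrl g (p k t) - vel_ctrl g (p i t)))) (at t)))"

definition flocking :: "nat \<Rightarrow> (nat \<Rightarrow> real \<Rightarrow> 'a::real_normed_vector) \<Rightarrow> (nat \<Rightarrow> real \<Rightarrow> 'a) \<Rightarrow> bool" where
  "flocking N q p \<longleftrightarrow>
     (\<exists>C. \<forall>t\<ge>0. cfg_diam N (\<lambda>i. q i t) \<le> C) \<and>
     ((\<lambda>t. cfg_diam N (\<lambda>i. p i t)) \<longlongrightarrow> 0) at_top"

end

theory Submission
  imports Defs "HOL-Real_Asymp.Real_Asymp"
begin



lemma vd_norm2:
  fixes f :: "real \<Rightarrow> 'a::real_inner"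
  assumes "(f has_vector_derivative f') (at t)"
  shows "((\<lambda>t. (norm (f t))\<^sup>2) has_real_derivative (2 * (f t \<bullet> f'))) (at t)"
proof -
  have d: "(f has_derivative (\<lambda>h. h *\<^sub>R f')) (at t)"
    using assms by (simp add: has_vector_derivative_def)
  have "((\<lambda>t. f t \<bullet> f t) has_derivative (\<lambda>h. f t \<bullet> (h *\<^sub>R f') + (h *\<^sub>R f') \<bullet> f t)) (at t)"
    by (rule has_derivative_inner[OF d d])
  moreover have "(\<lambda>h. f t \<bullet> (h *\<^sub>R f') + (h *\<^sub>R f') \<bullet> f t) = (*) (2 * (f t \<bullet> f'))"
    by (rule ext) (simp add: inner_commute algebra_simps)
  ultimately show ?thesis
    by (simp add: has_field_derivative_def power2_norm_eq_inner)
qed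

lemma lin_interp:
  fixes F1 F2 c a b E :: real
  assumes "F1 \<ge> 0" "F2 \<ge> 0" "\<bar>c\<bar> \<le> a * b" "a > 0" "b > 0"
    and "2 * a * b * E = (a*b + c) * F1 + (a*b - c) * F2"
  shows "E \<ge> 0"
proof -
  have "(a*b + c) * F1 \<ge> 0" "(a*b - c) * F2 \<ge> 0" using assms by auto
  then have "(2 * a * b) * E \<ge> 0" using assms(6) by simp
  moreover have "2 * a * b > 0" using assms by simp
  ultimately show ?thesis by (simp add: zero_le_mult_iff)
qed

lemma id_mono:
  fixes a b c m \<alpha> \<beta> :: real
  shows "2 * a * b * (\<alpha> * a\<^sup>2 - \<beta> * c - \<alpha> * c + \<beta> * b\<^sup>2 - m * (a\<^sup>2 + b\<^sup>2 - 2 * c)) = (a*b + c) * ((\<alpha> * a - \<beta> * b) * (a - b) - m * (a - b)\<^sup>2) + (a*b - c) * ((\<alpha> * a + \<beta> * b) * (a + b) - m * (a + b)\<^sup>2)"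
  by (simp add: algebra_simps power2_eq_square)

lemma id_lip:
  fixes a b c M \<alpha> \<beta> :: real
  shows "2 * a * b * (M\<^sup>2 * (a\<^sup>2 + b\<^sup>2 - 2 * c) - (\<alpha>\<^sup>2 * a\<^sup>2 - 2 * \<alpha> * \<beta> * c + \<beta>\<^sup>2 * b\<^sup>2)) = (a*b + c) * (M\<^sup>2 * (a - b)\<^sup>2 - (\<alpha> * a - \<beta> * b)\<^sup>2) + (a*b - c) * (M\<^sup>2 * (a + b)\<^sup>2 - (\<alpha> * a + \<beta> * b)\<^sup>2)"
  by (simp add: algebra_simps power2_eq_square)

lemma vel_ctrl_alt:
  "vel_ctrl g v = (if v = 0 then 0 else (g (norm v) / norm v) *\<^sub>R v)"
  by (simp add: vel_ctrl_def divide_inverse_commute)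

lemma nonincreasing_from_deriv:
  fixes F F' :: "real \<Rightarrow> real"
  assumes "continuous_on {0..} F" "\<And>t. t > 0 \<Longrightarrow> (F has_real_derivative F' t) (at t)"
    "\<And>t. t > 0 \<Longrightarrow> F' t \<le> 0" "0 \<le> s" "s \<le> t"
  shows "F t \<le> F s"
proof (rule DERIV_nonpos_imp_decreasing_open[OF assms(5)])
  fix x assume x: "s < x" "x < t"
  then have "x > 0" using assms(4) by linarith
  then show "\<exists>y. (F has_real_derivative y) (at x) \<and> y \<le> 0"
    using assms(2)[of x] assms(3)[of x] by blast
next
  show "continuous_on {s..t} F" using continuous_on_subset[OF assms(1)] assms(4) by auto
qed

locale csvc =
  fixes N :: nat and \<kappa> :: real
    and g g' \<psi> :: "real \<Rightarrow> real"
    and q0 p0 :: "nat \<Rightarrow> 'a::euclidean_space"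
    and q p :: "nat \<Rightarrow> real \<Rightarrow> 'a"
  assumes N: "N \<ge> 1" and kappa: "\<kappa> > 0"
    and g_deriv: "\<And>r. r \<ge> 0 \<Longrightarrow> (g has_real_derivative g' r) (at r within {0..})"
    and g0: "g 0 = 0"
    and g'_bounds: "\<And>b. b \<ge> 0 \<Longrightarrow> \<exists>m M. 0 < m \<and> (\<forall>r\<in>{0..b}. m \<le> g' r \<and> g' r \<le> M)"
    and psi_pos: "\<And>r. r \<ge> 0 \<Longrightarrow> \<psi> r > 0"
    and psi_bdd: "bounded (\<psi> ` {0..})"
    and psi_lip: "\<exists>L. L-lipschitz_on {0..} \<psi>"
    and psi_noninc: "\<And>r s. r \<ge> 0 \<Longrightarrow> s \<ge> 0 \<Longrightarrow> (\<psi> r - \<psi> s) * (r - s) \<le> 0"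
    and sol: "CSVC_solution N \<kappa> g \<psi> q0 p0 q p"
begin

lemma g_cont: "continuous_on {0..} g"
  by (rule DERIV_continuous_on) (use g_deriv in auto)

lemma g_at: "r > 0 \<Longrightarrow> (g has_real_derivative g' r) (at r)"
  using g_deriv[of r] at_within_interior[of r "{0..}"] by simp

lemma g_slope_lower:
  assumes "0 \<le> a" "a \<le> b" "\<And>r. a \<le> r \<Longrightarrow> r \<le> b \<Longrightarrow> c \<le> g' r"
  shows "c * (b - a) \<le> g b - g a"
proof -
  have "(\<lambda>x. g x - c*x) a \<le> (\<lambda>x. g x - c*x) b"
  proof (rule DERIV_nonneg_imp_increasing_open[OF \<open>a \<le> b\<close>])
    fix x assume x: "a < x" "x < b"
    have "((\<lambda>x. g x - c * x) has_real_derivative (g' x - c)) (at x)"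
      using g_at[of x] x assms(1) by (auto intro!: derivative_eq_intros)
    then show "\<exists>y. ((\<lambda>x. g x - c * x) has_real_derivative y) (at x) \<and> 0 \<le> y"
      using assms(3)[of x] x by auto
  next
    have "continuous_on {a..b} g" using continuous_on_subset[OF g_cont, of "{a..b}"] assms(1) by auto
    then show "continuous_on {a..b} (\<lambda>x. g x - c * x)"
      by (auto intro!: continuous_intros)
  qed
  then show ?thesis by (simp add: algebra_simps)
qed

lemma g_slope_upper:
  assumes "0 \<le> a" "a \<le> b" "\<And>r. a \<le> r \<Longrightarrow> r \<le> b \<Longrightarrow> g' r \<le> c"
  shows "g b - g a \<le> c * (b - a)"
proof -
  have "(\<lambda>x. c*x - g x) a \<le> (\<lambda>x. c*x - g x) b"
  proof (rule DERIV_nonneg_imp_increasing_open[OF \<open>a \<le> b\<close>])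
    fix x assume x: "a < x" "x < b"
    have "((\<lambda>x. c * x - g x) has_real_derivative (c - g' x)) (at x)"
      using g_at[of x] x assms(1) by (auto intro!: derivative_eq_intros)
    then show "\<exists>y. ((\<lambda>x. c * x - g x) has_real_derivative y) (at x) \<and> 0 \<le> y"
      using assms(3)[of x] x by auto
  next
    have "continuous_on {a..b} g" using continuous_on_subset[OF g_cont, of "{a..b}"] assms(1) by auto
    then show "continuous_on {a..b} (\<lambda>x. c * x - g x)"
      by (auto intro!: continuous_intros)
  qed
  then show ?thesis by (simp add: algebra_simps)
qed

lemma g'_nonneg: assumes "r \<ge> 0" shows "g' r \<ge> 0"
proof -
  obtain m M where "0 < m" "\<forall>s\<in>{0..r}. m \<le> g' s \<and> g' s \<le> M" using g'_bounds[OF assms] by blast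
  then have "m \<le> g' r" using assms by (meson atLeastAtMost_iff order_refl)
  with \<open>0 < m\<close> show ?thesis by simp
qed

lemma g_mono: "0 \<le> a \<Longrightarrow> a \<le> b \<Longrightarrow> g a \<le> g b"
  using g_slope_lower[of a b 0] g'_nonneg by auto

lemma g_nonneg: "0 \<le> a \<Longrightarrow> 0 \<le> g a"
  using g_mono[of 0 a] g0 by simp

lemma inner_G: "x \<bullet> vel_ctrl g x = norm x * g (norm x)"
  by (auto simp: vel_ctrl_alt power2_norm_eq_inner[symmetric] power2_eq_square)

lemma norm_G: "norm (vel_ctrl g x) = g (norm x)"
  using g_nonneg[of "norm x"] g0 by (auto simp: vel_ctrl_alt)

lemma inner_G_le: "y \<bullet> vel_ctrl g x \<le> norm y * g (norm x)"
proof -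
  have "y \<bullet> vel_ctrl g x \<le> norm y * norm (vel_ctrl g x)" by (rule Cauchy_Schwarz_ineq2[THEN abs_le_D1])
  then show ?thesis by (simp add: norm_G)
qed

lemma mono_G:
  fixes x y :: 'a
  assumes "norm x \<le> R" "norm y \<le> R" "\<And>r. 0 \<le> r \<Longrightarrow> r \<le> R \<Longrightarrow> m \<le> g' r"
  shows "m * (norm (x - y))\<^sup>2 \<le> (x - y) \<bullet> (vel_ctrl g x - vel_ctrl g y)"
proof -
  define a b where "a = norm x" and "b = norm y"
  have aR: "a \<le> R" "b \<le> R" "0 \<le> a" "0 \<le> b" using assms by (auto simp: a_def b_def)
  have "m * (a - 0) \<le> g a - g 0"
    apply (rule g_slope_lower) using aR apply auto[2]
    apply (rule assms(3)) using aR by auto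
  then have ga: "m * a \<le> g a" using g0 by auto
  have "m * (b - 0) \<le> g b - g 0"
    apply (rule g_slope_lower) using aR apply auto[2]
    apply (rule assms(3)) using aR by auto
  then have gb: "m * b \<le> g b" using g0 by auto
  have F1: "m * (a - b)\<^sup>2 \<le> (g a - g b) * (a - b)"
  proof (cases "a \<le> b")
    case True
    have "m * (b - a) \<le> g b - g a"
      apply (rule g_slope_lower) using True aR apply auto[2]
      apply (rule assms(3)) using True aR by auto
    then have "m * (b - a) * (b - a) \<le> (g b - g a) * (b - a)" using True by (intro mult_right_mono) auto
    then show ?thesis by (simp add: power2_eq_square algebra_simps)
  next
    case False
    have "m * (a - b) \<le> g a - g b"
      apply (rule g_slope_lower) using False aR apply auto[2]
      apply (rule assms(3)) using False aR by auto
    then have "m * (a - b) * (a - b) \<le> (g a - g b) * (a - b)" using False by (intro mult_right_mono) auto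
    then show ?thesis by (simp add: power2_eq_square algebra_simps)
  qed
  have F2: "m * (a + b)\<^sup>2 \<le> (g a + g b) * (a + b)"
  proof -
    have "0 \<le> g a + g b - m * (a + b)" using ga gb by (simp add: algebra_simps)
    moreover have "0 \<le> a + b" by (simp add: a_def b_def)
    ultimately have "0 \<le> (g a + g b - m * (a + b)) * (a + b)" by simp
    then show ?thesis by (simp add: power2_eq_square algebra_simps)
  qed
  show ?thesis
  proof (cases "x = 0 \<or> y = 0")
    case True
    then show ?thesis
    proof
      assume "x = 0"
      have "b * (m * b) \<le> b * g b" using gb aR by (intro mult_left_mono) auto
      then show ?thesis using \<open>x = 0\<close> by (simp add: vel_ctrl_alt[of g 0] inner_G b_def power2_eq_square algebra_simps)
    next
      assume "y = 0"
      have "a * (m * a) \<le> a * g a" using ga aR by (intro mult_left_mono) auto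
      then show ?thesis using \<open>y = 0\<close> by (simp add: vel_ctrl_alt[of g 0] inner_G a_def power2_eq_square algebra_simps)
    qed
  next
    case False
    then have a0: "a > 0" and b0: "b > 0" by (auto simp: a_def b_def)
    define c where "c = x \<bullet> y"
    have cb: "\<bar>c\<bar> \<le> a * b" unfolding c_def a_def b_def by (rule Cauchy_Schwarz_ineq2)
    have xx: "x \<bullet> x = a\<^sup>2" "y \<bullet> y = b\<^sup>2" by (simp_all add: a_def b_def power2_norm_eq_inner)
    have lhs: "(norm (x - y))\<^sup>2 = a\<^sup>2 + b\<^sup>2 - 2 * c"
      by (simp add: power2_norm_eq_inner[of "x - y"] inner_diff_left inner_diff_right xx c_def inner_commute)
    define \<alpha> \<beta> where "\<alpha> = g a / a" and "\<beta> = g b / b"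
    have ab: "g a = \<alpha> * a" "g b = \<beta> * b" using a0 b0 by (auto simp: \<alpha>_def \<beta>_def)
    have Gx: "vel_ctrl g x = \<alpha> *\<^sub>R x" "vel_ctrl g y = \<beta> *\<^sub>R y"
      using False by (simp_all add: vel_ctrl_alt a_def b_def \<alpha>_def \<beta>_def)
    have rhs: "(x - y) \<bullet> (vel_ctrl g x - vel_ctrl g y) = \<alpha> * a\<^sup>2 - \<beta> * c - \<alpha> * c + \<beta> * b\<^sup>2"
      unfolding Gx by (simp add: inner_diff_left inner_diff_right xx c_def inner_commute algebra_simps)
    have "0 \<le> \<alpha> * a\<^sup>2 - \<beta> * c - \<alpha> * c + \<beta> * b\<^sup>2 - m * (a\<^sup>2 + b\<^sup>2 - 2 * c)"
    proof (rule lin_interp[OF _ _ cb a0 b0])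
      show "0 \<le> (\<alpha> * a - \<beta> * b) * (a - b) - m * (a - b)\<^sup>2" using F1 unfolding ab by (simp only: diff_ge_0_iff_ge)
      show "0 \<le> (\<alpha> * a + \<beta> * b) * (a + b) - m * (a + b)\<^sup>2" using F2 unfolding ab by (simp only: diff_ge_0_iff_ge)
    qed (rule id_mono)
    then show ?thesis unfolding lhs rhs by (simp only: diff_ge_0_iff_ge)
  qed
qed

lemma lip_G:
  fixes x y :: 'a
  assumes "norm x \<le> R" "norm y \<le> R" "\<And>r. 0 \<le> r \<Longrightarrow> r \<le> R \<Longrightarrow> g' r \<le> M"
  shows "norm (vel_ctrl g x - vel_ctrl g y) \<le> M * norm (x - y)"
proof -
  define a b where "a = norm x" and "b = norm y"
  have aR: "a \<le> R" "b \<le> R" "0 \<le> a" "0 \<le> b" using assms by (auto simp: a_def b_def)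
  have "g' 0 \<le> M" using aR by (intro assms(3)) auto
  then have M0: "M \<ge> 0" using g'_nonneg[of 0] by linarith
  have "g a - g 0 \<le> M * (a - 0)"
    apply (rule g_slope_upper) using aR apply auto[2]
    apply (rule assms(3)) using aR by auto
  then have ga: "g a \<le> M * a" "0 \<le> g a" using g0 g_nonneg[OF aR(3)] by auto
  have "g b - g 0 \<le> M * (b - 0)"
    apply (rule g_slope_upper) using aR apply auto[2]
    apply (rule assms(3)) using aR by auto
  then have gb: "g b \<le> M * b" "0 \<le> g b" using g0 g_nonneg[OF aR(4)] by auto
  have F1: "(g a - g b)\<^sup>2 \<le> M\<^sup>2 * (a - b)\<^sup>2"
  proof -
    have "\<bar>g a - g b\<bar> \<le> M * \<bar>a - b\<bar>"
    proof (cases "a \<le> b")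
      case True
      have "g b - g a \<le> M * (b - a)"
        apply (rule g_slope_upper) using True aR apply auto[2]
        apply (rule assms(3)) using True aR by auto
      then show ?thesis using g_mono[of a b] True aR by auto
    next
      case False
      have "g a - g b \<le> M * (a - b)"
        apply (rule g_slope_upper) using False aR apply auto[2]
        apply (rule assms(3)) using False aR by auto
      then show ?thesis using g_mono[of b a] False aR by auto
    qed
    then have "\<bar>g a - g b\<bar>\<^sup>2 \<le> (M * \<bar>a - b\<bar>)\<^sup>2" by (intro power_mono) auto
    then show ?thesis by (simp add: power_mult_distrib)
  qed
  have F2: "(g a + g b)\<^sup>2 \<le> M\<^sup>2 * (a + b)\<^sup>2"
  proof -
    have "g a + g b \<le> M * (a + b)" using ga gb by (simp add: algebra_simps)
    then have "(g a + g b)\<^sup>2 \<le> (M * (a + b))\<^sup>2" using ga gb by (intro power_mono) auto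
    then show ?thesis by (simp add: power_mult_distrib)
  qed
  have sq: "(norm (vel_ctrl g x - vel_ctrl g y))\<^sup>2 \<le> (M * norm (x - y))\<^sup>2"
  proof (cases "x = 0 \<or> y = 0")
    case True
    then show ?thesis
    proof
      assume "x = 0"
      have "(g b)\<^sup>2 \<le> (M * b)\<^sup>2" using gb by (intro power_mono) auto
      then show ?thesis using \<open>x = 0\<close> by (simp add: vel_ctrl_alt[of g 0] norm_G b_def power_mult_distrib)
    next
      assume "y = 0"
      have "(g a)\<^sup>2 \<le> (M * a)\<^sup>2" using ga by (intro power_mono) auto
      then show ?thesis using \<open>y = 0\<close> by (simp add: vel_ctrl_alt[of g 0] norm_G a_def power_mult_distrib)
    qed
  next
    case False
    then have a0: "a > 0" and b0: "b > 0" by (auto simp: a_def b_def)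
    define c where "c = x \<bullet> y"
    have cb: "\<bar>c\<bar> \<le> a * b" unfolding c_def a_def b_def by (rule Cauchy_Schwarz_ineq2)
    have xx: "x \<bullet> x = a\<^sup>2" "y \<bullet> y = b\<^sup>2" by (simp_all add: a_def b_def power2_norm_eq_inner)
    have lhs: "(norm (x - y))\<^sup>2 = a\<^sup>2 + b\<^sup>2 - 2 * c"
      by (simp add: power2_norm_eq_inner[of "x - y"] inner_diff_left inner_diff_right xx c_def inner_commute)
    define \<alpha> \<beta> where "\<alpha> = g a / a" and "\<beta> = g b / b"
    have ab: "g a = \<alpha> * a" "g b = \<beta> * b" using a0 b0 by (auto simp: \<alpha>_def \<beta>_def)
    have Gx: "vel_ctrl g x = \<alpha> *\<^sub>R x" "vel_ctrl g y = \<beta> *\<^sub>R y"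
      using False by (simp_all add: vel_ctrl_alt a_def b_def \<alpha>_def \<beta>_def)
    have rhs: "(norm (vel_ctrl g x - vel_ctrl g y))\<^sup>2 = \<alpha>\<^sup>2 * a\<^sup>2 - 2 * \<alpha> * \<beta> * c + \<beta>\<^sup>2 * b\<^sup>2"
      unfolding Gx power2_norm_eq_inner by (simp add: inner_diff_left inner_diff_right xx c_def inner_commute algebra_simps power2_eq_square)
    have "0 \<le> M\<^sup>2 * (a\<^sup>2 + b\<^sup>2 - 2 * c) - (\<alpha>\<^sup>2 * a\<^sup>2 - 2 * \<alpha> * \<beta> * c + \<beta>\<^sup>2 * b\<^sup>2)"
    proof (rule lin_interp[OF _ _ cb a0 b0])
      show "0 \<le> M\<^sup>2 * (a - b)\<^sup>2 - (\<alpha> * a - \<beta> * b)\<^sup>2" using F1 unfolding ab by (simp only: diff_ge_0_iff_ge)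
      show "0 \<le> M\<^sup>2 * (a + b)\<^sup>2 - (\<alpha> * a + \<beta> * b)\<^sup>2" using F2 unfolding ab by (simp only: diff_ge_0_iff_ge)
    qed (rule id_lip)
    then show ?thesis unfolding lhs rhs power_mult_distrib by (simp only: diff_ge_0_iff_ge)
  qed
  show ?thesis by (rule power2_le_imp_le[OF sq]) (simp add: M0)
qed

end



definition sqs :: "nat \<Rightarrow> (nat \<Rightarrow> 'a::real_normed_vector) \<Rightarrow> real" where
  "sqs N x = (\<Sum>i\<in>{1..N}. \<Sum>j\<in>{1..N}. (norm (x i - x j))\<^sup>2)"

lemma cfg_norm_sqs: "cfg_norm N x = sqrt (sqs N x)"
  by (simp add: cfg_norm_def sqs_def)

lemma sqs_nonneg: "0 \<le> sqs N x"
  unfolding sqs_def by (intro sum_nonneg) auto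

lemma term_le_sqs:
  assumes "i \<in> {1..N}" "j \<in> {1..N}"
  shows "(norm (x i - x j))\<^sup>2 \<le> sqs N x"
proof -
  have "(norm (x i - x j))\<^sup>2 \<le> (\<Sum>j'\<in>{1..N}. (norm (x i - x j'))\<^sup>2)"
    by (rule member_le_sum[OF assms(2)]) auto
  also have "\<dots> \<le> sqs N x"
    unfolding sqs_def by (rule member_le_sum[OF assms(1)]) (auto intro: sum_nonneg)
  finally show ?thesis .
qed

lemma term_le_sqrt_sqs:
  assumes "i \<in> {1..N}" "j \<in> {1..N}"
  shows "norm (x i - x j) \<le> sqrt (sqs N x)"
  by (rule real_le_rsqrt[OF term_le_sqs[OF assms]])

lemma diam_eq: "cfg_diam N x = Max ((\<lambda>(i,j). norm (x i - x j)) ` ({1..N} \<times> {1..N}))"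
proof -
  have "{norm (x i - x j) | i j. i \<in> {1..N} \<and> j \<in> {1..N}} = (\<lambda>(i,j). norm (x i - x j)) ` ({1..N} \<times> {1..N})"
    by (auto simp: image_iff) blast
  then show ?thesis by (simp add: cfg_diam_def)
qed

lemma diam_ge:
  assumes "i \<in> {1..N}" "j \<in> {1..N}"
  shows "norm (x i - x j) \<le> cfg_diam N x"
  unfolding diam_eq by (rule Max_ge) (use assms in auto)

lemma diam_le:
  assumes "N \<ge> 1" "\<And>i j. i \<in> {1..N} \<Longrightarrow> j \<in> {1..N} \<Longrightarrow> norm (x i - x j) \<le> D"
  shows "cfg_diam N x \<le> D"
  unfolding diam_eq
proof (subst Max_le_iff)
  show "finite ((\<lambda>(i, j). norm (x i - x j)) ` ({1..N} \<times> {1..N}))" by simp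
  show "(\<lambda>(i, j). norm (x i - x j)) ` ({1..N} \<times> {1..N}) \<noteq> {}" using assms(1) by auto
  show "\<forall>a\<in>(\<lambda>(i, j). norm (x i - x j)) ` ({1..N} \<times> {1..N}). a \<le> D" using assms(2) by auto
qed

lemma diam_nonneg: "N \<ge> 1 \<Longrightarrow> 0 \<le> cfg_diam N x"
  using diam_ge[of 1 N 1 x] by simp

lemma diam_le_sqrt: "N \<ge> 1 \<Longrightarrow> cfg_diam N x \<le> sqrt (sqs N x)"
  by (rule diam_le) (auto intro: term_le_sqrt_sqs)

lemma swap_sym:
  fixes A :: "nat \<Rightarrow> nat \<Rightarrow> real" and F :: "real \<Rightarrow> nat \<Rightarrow> 'b::comm_monoid_add"
  assumes "\<And>i k. A i k = A k i"
  shows "(\<Sum>i\<in>I. \<Sum>k\<in>I. F (A i k) k) = (\<Sum>i\<in>I. \<Sum>k\<in>I. F (A i k) i)"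
proof -
  have "(\<Sum>i\<in>I. \<Sum>k\<in>I. F (A i k) k) = (\<Sum>k\<in>I. \<Sum>i\<in>I. F (A i k) k)" by (rule sum.swap)
  also have "\<dots> = (\<Sum>i\<in>I. \<Sum>k\<in>I. F (A i k) i)" by (simp add: assms)
  finally show ?thesis .
qed

lemma energy_identity:
  fixes P Gv :: "nat \<Rightarrow> 'a::real_inner" and A :: "nat \<Rightarrow> nat \<Rightarrow> real" and I :: "nat set" and c :: real
  assumes fin: "finite I" and sym: "\<And>i k. A i k = A k i"
  defines "W \<equiv> \<lambda>i. c *\<^sub>R (\<Sum>k\<in>I. A i k *\<^sub>R (Gv k - Gv i))"
  shows "(\<Sum>i\<in>I. \<Sum>j\<in>I. (P i - P j) \<bullet> (W i - W j))
         = - real (card I) * c * (\<Sum>i\<in>I. \<Sum>k\<in>I. A i k * ((P k - P i) \<bullet> (Gv k - Gv i)))"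
proof -
  have s1: "(\<Sum>i\<in>I. \<Sum>k\<in>I. A i k *\<^sub>R Gv k) = (\<Sum>i\<in>I. \<Sum>k\<in>I. A i k *\<^sub>R Gv i)"
    using swap_sym[of A "\<lambda>a j. a *\<^sub>R Gv j" I, OF sym] .
  have sumW: "(\<Sum>i\<in>I. W i) = 0"
    unfolding W_def by (simp add: scaleR_sum_right[symmetric] scaleR_diff_right sum_subtractf s1)
  have t1: "(\<Sum>j\<in>I. P i \<bullet> W j) = 0" for i
    using sumW by (simp add: inner_sum_right[symmetric])
  have t2: "(\<Sum>i\<in>I. \<Sum>j\<in>I. P j \<bullet> W i) = 0"
  proof -
    have "(\<Sum>i\<in>I. \<Sum>j\<in>I. P j \<bullet> W i) = (\<Sum>j\<in>I. \<Sum>i\<in>I. P j \<bullet> W i)" by (rule sum.swap)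
    also have "\<dots> = 0" using t1 by simp
    finally show ?thesis .
  qed
  have L: "(\<Sum>i\<in>I. \<Sum>j\<in>I. (P i - P j) \<bullet> (W i - W j))
      = (\<Sum>i\<in>I. \<Sum>j\<in>I. P i \<bullet> W i) - (\<Sum>i\<in>I. \<Sum>j\<in>I. P i \<bullet> W j)
        - (\<Sum>i\<in>I. \<Sum>j\<in>I. P j \<bullet> W i) + (\<Sum>i\<in>I. \<Sum>j\<in>I. P j \<bullet> W j)"
    by (simp add: inner_diff_left inner_diff_right sum_subtractf sum.distrib algebra_simps)
  have L2: "(\<Sum>i\<in>I. \<Sum>j\<in>I. P j \<bullet> W j) = (\<Sum>i\<in>I. \<Sum>j\<in>I. P i \<bullet> W i)"
    by (rule sum.swap)
  have L3: "(\<Sum>i\<in>I. \<Sum>j\<in>I. P i \<bullet> W i) = real (card I) * (\<Sum>i\<in>I. P i \<bullet> W i)"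
    by (simp add: sum_distrib_left)
  have LHS: "(\<Sum>i\<in>I. \<Sum>j\<in>I. (P i - P j) \<bullet> (W i - W j)) = 2 * real (card I) * (\<Sum>i\<in>I. P i \<bullet> W i)"
    unfolding L L2 L3 using t1 t2 by simp
  have PW: "(\<Sum>i\<in>I. P i \<bullet> W i) = c * (\<Sum>i\<in>I. \<Sum>k\<in>I. A i k * (P i \<bullet> Gv k) - A i k * (P i \<bullet> Gv i))"
    unfolding W_def by (simp add: inner_sum_right inner_diff_right sum_distrib_left algebra_simps)
  have r1: "(\<Sum>i\<in>I. \<Sum>k\<in>I. A i k * (P k \<bullet> Gv k)) = (\<Sum>i\<in>I. \<Sum>k\<in>I. A i k * (P i \<bullet> Gv i))"
    using swap_sym[of A "\<lambda>a j. a * (P j \<bullet> Gv j)" I, OF sym] .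
  have r2: "(\<Sum>i\<in>I. \<Sum>k\<in>I. A i k * (P k \<bullet> Gv i)) = (\<Sum>i\<in>I. \<Sum>k\<in>I. A i k * (P i \<bullet> Gv k))"
  proof -
    have "(\<Sum>i\<in>I. \<Sum>k\<in>I. A i k * (P k \<bullet> Gv i)) = (\<Sum>k\<in>I. \<Sum>i\<in>I. A i k * (P k \<bullet> Gv i))" by (rule sum.swap)
    also have "\<dots> = (\<Sum>i\<in>I. \<Sum>k\<in>I. A i k * (P i \<bullet> Gv k))" by (simp add: sym)
    finally show ?thesis .
  qed
  have S: "(\<Sum>i\<in>I. \<Sum>k\<in>I. A i k * ((P k - P i) \<bullet> (Gv k - Gv i)))
     = (\<Sum>i\<in>I. \<Sum>k\<in>I. A i k * (P k \<bullet> Gv k)) - (\<Sum>i\<in>I. \<Sum>k\<in>I. A i k * (P k \<bullet> Gv i))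
       - (\<Sum>i\<in>I. \<Sum>k\<in>I. A i k * (P i \<bullet> Gv k)) + (\<Sum>i\<in>I. \<Sum>k\<in>I. A i k * (P i \<bullet> Gv i))"
    by (simp add: inner_diff_left inner_diff_right sum_subtractf sum.distrib algebra_simps)
  have S2: "(\<Sum>i\<in>I. \<Sum>k\<in>I. A i k * ((P k - P i) \<bullet> (Gv k - Gv i)))
     = - 2 * (\<Sum>i\<in>I. \<Sum>k\<in>I. A i k * (P i \<bullet> Gv k) - A i k * (P i \<bullet> Gv i))"
    unfolding S r1 r2 by (simp add: sum_subtractf)
  show ?thesis unfolding LHS PW S2 by simp
qed




context csvc begin

definition "P0M = Max ((\<lambda>i. norm (p0 i)) ` {1..N})"
definition "MG = (SUP r\<in>{0..P0M}. g' r)"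
definition "mG = (INF r\<in>{0..P0M}. g' r)"
definition "Mc = min mG (mG\<^sup>2 / MG)"

abbreviation "GG i t \<equiv> vel_ctrl g (p i t)"
abbreviation "pd i t \<equiv> (\<kappa> / real N) *\<^sub>R (\<Sum>k\<in>{1..N}. \<psi> (norm (q k t - q i t)) *\<^sub>R (GG k t - GG i t))"

lemma q_init: "i \<in> {1..N} \<Longrightarrow> q i 0 = q0 i" using sol by (simp add: CSVC_solution_def)
lemma p_init: "i \<in> {1..N} \<Longrightarrow> p i 0 = p0 i" using sol by (simp add: CSVC_solution_def)
lemma q_cont: "i \<in> {1..N} \<Longrightarrow> continuous_on {0..} (q i)" using sol by (simp add: CSVC_solution_def)
lemma p_cont: "i \<in> {1..N} \<Longrightarrow> continuous_on {0..} (p i)" using sol by (simp add: CSVC_solution_def)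
lemma q_deriv: "i \<in> {1..N} \<Longrightarrow> t > 0 \<Longrightarrow> (q i has_vector_derivative GG i t) (at t)"
  using sol by (simp add: CSVC_solution_def)
lemma p_deriv: "i \<in> {1..N} \<Longrightarrow> t > 0 \<Longrightarrow> (p i has_vector_derivative pd i t) (at t)"
  using sol by (simp add: CSVC_solution_def)

lemma psi_nonneg: "r \<ge> 0 \<Longrightarrow> \<psi> r \<ge> 0" using psi_pos[of r] by simp

lemma psi_mono: "0 \<le> r \<Longrightarrow> r \<le> s \<Longrightarrow> \<psi> s \<le> \<psi> r"
proof -
  assume a: "0 \<le> r" "r \<le> s"
  show "\<psi> s \<le> \<psi> r"
  proof (cases "r = s")
    case False
    then have "r < s" using a by simp
    have "(\<psi> r - \<psi> s) * (r - s) \<le> 0" using psi_noninc[of r s] a by simp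
    then have "0 \<le> (\<psi> r - \<psi> s) * (s - r)" by (simp add: algebra_simps)
    then show ?thesis using \<open>r < s\<close> by (simp add: zero_le_mult_iff)
  qed simp
qed

lemma P0M_ge: "i \<in> {1..N} \<Longrightarrow> norm (p0 i) \<le> P0M"
  unfolding P0M_def by (rule Max_ge) auto

lemma P0M_nonneg: "P0M \<ge> 0"
proof -
  have "norm (p0 1) \<le> P0M" using N by (intro P0M_ge) auto
  then show ?thesis by (meson norm_ge_zero order_trans)
qed

lemma g'_bdd: "bdd_below (g' ` {0..P0M})" "bdd_above (g' ` {0..P0M})"
proof -
  obtain m M where "0 < m" "\<forall>r\<in>{0..P0M}. m \<le> g' r \<and> g' r \<le> M" using g'_bounds[OF P0M_nonneg] by blast
  then show "bdd_below (g' ` {0..P0M})" "bdd_above (g' ` {0..P0M})"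
    by (auto intro!: bdd_belowI[of _ m] bdd_aboveI[of _ M])
qed

lemma mG_le: "0 \<le> r \<Longrightarrow> r \<le> P0M \<Longrightarrow> mG \<le> g' r"
  unfolding mG_def by (rule cINF_lower[OF g'_bdd(1)]) auto

lemma MG_ge: "0 \<le> r \<Longrightarrow> r \<le> P0M \<Longrightarrow> g' r \<le> MG"
  unfolding MG_def by (rule cSUP_upper[OF _ g'_bdd(2)]) auto

lemma mG_pos: "mG > 0"
proof -
  obtain m M where m: "0 < m" "\<forall>r\<in>{0..P0M}. m \<le> g' r \<and> g' r \<le> M" using g'_bounds[OF P0M_nonneg] by blast
  have "m \<le> mG" unfolding mG_def
    by (rule cINF_greatest) (use m P0M_nonneg in auto)
  then show ?thesis using m by simp
qed

lemma mG_le_MG: "mG \<le> MG"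
  using mG_le[of 0] MG_ge[of 0] P0M_nonneg by simp

lemma MG_pos: "MG > 0" using mG_pos mG_le_MG by simp

lemma Mc_pos: "Mc > 0" using mG_pos MG_pos by (simp add: Mc_def)

lemma Mc_le: "Mc \<le> mG" by (simp add: Mc_def)

lemma sqs_cont_p: "continuous_on {0..} (\<lambda>t. sqs N (\<lambda>i. p i t))"
  unfolding sqs_def by (intro continuous_intros p_cont) auto

lemma sqs_cont_q: "continuous_on {0..} (\<lambda>t. sqs N (\<lambda>i. q i t))"
  unfolding sqs_def by (intro continuous_intros q_cont) auto

lemma EQ_deriv:
  assumes "t > 0"
  shows "((\<lambda>t. sqs N (\<lambda>i. q i t)) has_real_derivative
           (\<Sum>i\<in>{1..N}. \<Sum>j\<in>{1..N}. 2 * ((q i t - q j t) \<bullet> (GG i t - GG j t)))) (at t)"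
  unfolding sqs_def
  by (intro DERIV_sum vd_norm2 has_vector_derivative_diff q_deriv assms) auto

lemma EP_deriv:
  assumes "t > 0"
  shows "((\<lambda>t. sqs N (\<lambda>i. p i t)) has_real_derivative
           (- 2 * \<kappa> * (\<Sum>i\<in>{1..N}. \<Sum>k\<in>{1..N}. \<psi> (norm (q k t - q i t)) * ((p k t - p i t) \<bullet> (GG k t - GG i t))))) (at t)"
proof -
  have d: "((\<lambda>t. sqs N (\<lambda>i. p i t)) has_real_derivative
           (\<Sum>i\<in>{1..N}. \<Sum>j\<in>{1..N}. 2 * ((p i t - p j t) \<bullet> (pd i t - pd j t)))) (at t)"
    unfolding sqs_def
    by (intro DERIV_sum vd_norm2 has_vector_derivative_diff p_deriv assms) auto
  have sym: "\<And>i k. \<psi> (norm (q k t - q i t)) = \<psi> (norm (q i t - q k t))"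
    by (simp add: norm_minus_commute)
  have "(\<Sum>i\<in>{1..N}. \<Sum>j\<in>{1..N}. (p i t - p j t) \<bullet> (pd i t - pd j t))
      = - real (card {1..N}) * (\<kappa> / real N) * (\<Sum>i\<in>{1..N}. \<Sum>k\<in>{1..N}. \<psi> (norm (q k t - q i t)) * ((p k t - p i t) \<bullet> (GG k t - GG i t)))"
    by (rule energy_identity[of "{1..N}" "\<lambda>i k. \<psi> (norm (q k t - q i t))" "\<lambda>i. p i t" "\<kappa> / real N" "\<lambda>k. GG k t", OF _ sym]) simp
  also have "\<dots> = - \<kappa> * (\<Sum>i\<in>{1..N}. \<Sum>k\<in>{1..N}. \<psi> (norm (q k t - q i t)) * ((p k t - p i t) \<bullet> (GG k t - GG i t)))"
    using N by simp
  finally have e: "(\<Sum>i\<in>{1..N}. \<Sum>j\<in>{1..N}. 2 * ((p i t - p j t) \<bullet> (pd i t - pd j t)))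
      = - 2 * \<kappa> * (\<Sum>i\<in>{1..N}. \<Sum>k\<in>{1..N}. \<psi> (norm (q k t - q i t)) * ((p k t - p i t) \<bullet> (GG k t - GG i t)))"
    by (simp add: sum_distrib_left[symmetric])
  show ?thesis using d unfolding e .
qed

end



context csvc begin

lemma inner_pd_nonpos:
  assumes "i \<in> {1..N}" "\<And>k. k \<in> {1..N} \<Longrightarrow> norm (p k t) \<le> norm (p i t)"
  shows "p i t \<bullet> pd i t \<le> 0"
proof -
  have "p i t \<bullet> pd i t = (\<kappa> / real N) * (\<Sum>k\<in>{1..N}. \<psi> (norm (q k t - q i t)) * (p i t \<bullet> GG k t - p i t \<bullet> GG i t))"
    by (simp add: inner_sum_right inner_diff_right)
  also have "\<dots> \<le> 0"
  proof (rule mult_nonneg_nonpos)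
    show "0 \<le> \<kappa> / real N" using kappa by simp
    show "(\<Sum>k\<in>{1..N}. \<psi> (norm (q k t - q i t)) * (p i t \<bullet> GG k t - p i t \<bullet> GG i t)) \<le> 0"
    proof (rule sum_nonpos)
      fix k assume k: "k \<in> {1..N}"
      have "p i t \<bullet> GG k t \<le> norm (p i t) * g (norm (p k t))" by (rule inner_G_le)
      also have "\<dots> \<le> norm (p i t) * g (norm (p i t))"
        by (rule mult_left_mono[OF g_mono]) (use assms(2)[OF k] in auto)
      also have "\<dots> = p i t \<bullet> GG i t" by (simp add: inner_G)
      finally have "p i t \<bullet> GG k t - p i t \<bullet> GG i t \<le> 0" by simp
      then show "\<psi> (norm (q k t - q i t)) * (p i t \<bullet> GG k t - p i t \<bullet> GG i t) \<le> 0"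
        using psi_nonneg[of "norm (q k t - q i t)"] by (simp add: mult_nonneg_nonpos)
    qed
  qed
  finally show ?thesis .
qed

lemma vbound_eps:
  assumes eps: "\<epsilon> > 0"
  shows "\<forall>t\<ge>0. \<forall>i\<in>{1..N}. (norm (p i t))\<^sup>2 < P0M\<^sup>2 + \<epsilon> * (1 + t)"
proof (rule ccontr)
  define thr where "thr = (\<lambda>t::real. P0M\<^sup>2 + \<epsilon> * (1 + t))"
  define S where "S = {t\<in>{0..}. \<exists>i\<in>{1..N}. thr t \<le> (norm (p i t))\<^sup>2}"
  assume "\<not> (\<forall>t\<ge>0. \<forall>i\<in>{1..N}. (norm (p i t))\<^sup>2 < P0M\<^sup>2 + \<epsilon> * (1 + t))"
  then obtain t0 i0 where "t0 \<ge> 0" "i0 \<in> {1..N}" "thr t0 \<le> (norm (p i0 t0))\<^sup>2"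
    by (auto simp: thr_def not_less)
  then have "t0 \<in> S" by (auto simp: S_def)
  then have Sne: "S \<noteq> {}" by blast
  have S_eq: "S = (\<Union>i\<in>{1..N}. {t\<in>{0..}. thr t \<le> (norm (p i t))\<^sup>2})"
    by (auto simp: S_def)
  have clS: "closed S"
    unfolding S_eq
  proof (intro closed_UN ballI)
    fix i assume i: "i \<in> {1..N}"
    show "closed {t\<in>{0..}. thr t \<le> (norm (p i t))\<^sup>2}"
      by (rule continuous_on_closed_Collect_le) (auto simp: thr_def intro!: continuous_intros p_cont[OF i])
  qed simp
  have bdd: "bdd_below S" by (rule bdd_belowI[of _ 0]) (auto simp: S_def)
  define ts where "ts = Inf S"
  have tsS: "ts \<in> S" unfolding ts_def by (rule closed_contains_Inf[OF Sne bdd clS])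
  have below: "s \<notin> S" if "s < ts" for s
    using cInf_lower[OF _ bdd, of s] that by (auto simp: ts_def)
  have ts0: "ts > 0"
  proof -
    have "ts \<ge> 0" using tsS by (auto simp: S_def)
    moreover have "ts \<noteq> 0"
    proof
      assume "ts = 0"
      then obtain i where i: "i \<in> {1..N}" "thr 0 \<le> (norm (p i 0))\<^sup>2" using tsS by (auto simp: S_def)
      have "norm (p i 0) \<le> P0M" using P0M_ge[OF i(1)] p_init[OF i(1)] by simp
      then have "(norm (p i 0))\<^sup>2 \<le> P0M\<^sup>2" by (intro power_mono) auto
      then show False using i(2) eps by (simp add: thr_def)
    qed
    ultimately show ?thesis by simp
  qed
  define Mx where "Mx = Max ((\<lambda>k. norm (p k ts)) ` {1..N})"
  have "Mx \<in> (\<lambda>k. norm (p k ts)) ` {1..N}" unfolding Mx_def by (rule Max_in) (use N in auto)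
  then obtain i where i: "i \<in> {1..N}" "norm (p i ts) = Mx" by auto
  have imax: "norm (p k ts) \<le> norm (p i ts)" if "k \<in> {1..N}" for k
    unfolding i(2) Mx_def by (rule Max_ge) (use that in auto)
  obtain j where j: "j \<in> {1..N}" "thr ts \<le> (norm (p j ts))\<^sup>2" using tsS by (auto simp: S_def)
  have "(norm (p j ts))\<^sup>2 \<le> (norm (p i ts))\<^sup>2" using imax[OF j(1)] by (intro power_mono) auto
  then have h0: "0 \<le> (norm (p i ts))\<^sup>2 - thr ts" using j(2) by linarith
  have d1: "((\<lambda>t. (norm (p i t))\<^sup>2) has_real_derivative 2 * (p i ts \<bullet> pd i ts)) (at ts)"
    by (rule vd_norm2[OF p_deriv[OF i(1) ts0]])
  have d2: "(thr has_real_derivative \<epsilon>) (at ts)"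
    unfolding thr_def by (auto intro!: derivative_eq_intros)
  have d: "((\<lambda>t. (norm (p i t))\<^sup>2 - thr t) has_real_derivative 2 * (p i ts \<bullet> pd i ts) - \<epsilon>) (at ts)"
    by (rule DERIV_diff[OF d1 d2])
  have neg: "2 * (p i ts \<bullet> pd i ts) - \<epsilon> < 0"
    using inner_pd_nonpos[OF i(1) imax] eps by simp
  obtain d where d: "d > 0" "\<And>h. h > 0 \<Longrightarrow> h < d \<Longrightarrow> (norm (p i ts))\<^sup>2 - thr ts < (norm (p i (ts - h)))\<^sup>2 - thr (ts - h)"
    using DERIV_neg_dec_left[OF d neg] by blast
  define hh where "hh = min (d/2) (ts/2)"
  have hh: "hh > 0" "hh < d" "hh < ts" "hh \<le> ts" using d(1) ts0 by (auto simp: hh_def)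
  have "0 < (norm (p i (ts - hh)))\<^sup>2 - thr (ts - hh)" using d(2)[OF hh(1) hh(2)] h0 by linarith
  then have "thr (ts - hh) \<le> (norm (p i (ts - hh)))\<^sup>2" by simp
  moreover have "ts - hh \<in> {0..}" using hh(4) by simp
  ultimately have "ts - hh \<in> S" unfolding S_def using i(1) by blast
  moreover have "ts - hh < ts" using hh(1) by simp
  ultimately show False using below by blast
qed

lemma vbound:
  assumes "i \<in> {1..N}" "t \<ge> 0"
  shows "norm (p i t) \<le> P0M"
proof -
  have "(norm (p i t))\<^sup>2 \<le> P0M\<^sup>2"
  proof (rule field_le_epsilon)
    fix e :: real assume e: "e > 0"
    have "0 < e / (1 + t)" using e assms(2) by simp
    from vbound_eps[OF this] assms have "(norm (p i t))\<^sup>2 < P0M\<^sup>2 + e / (1 + t) * (1 + t)" by blast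
    then show "(norm (p i t))\<^sup>2 \<le> P0M\<^sup>2 + e" using assms(2) by simp
  qed
  then show ?thesis using P0M_nonneg by (rule power2_le_imp_le)
qed

end



lemma exp_decay:
  fixes F F' :: "real \<Rightarrow> real"
  assumes cont: "continuous_on {0..} F"
    and der: "\<And>t. t > 0 \<Longrightarrow> (F has_real_derivative F' t) (at t)"
    and le: "\<And>t. t > 0 \<Longrightarrow> F' t \<le> - lam * F t"
    and t: "t \<ge> 0"
  shows "F t \<le> F 0 * exp (- lam * t)"
proof -
  define H where "H = (\<lambda>t. F t * exp (lam * t))"
  have "H t \<le> H 0"
  proof (rule nonincreasing_from_deriv[of H "\<lambda>t. (F' t + lam * F t) * exp (lam * t)"])
    show "continuous_on {0..} H" unfolding H_def by (intro continuous_intros cont)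
    fix s :: real assume s: "s > 0"
    show "(H has_real_derivative (F' s + lam * F s) * exp (lam * s)) (at s)"
      unfolding H_def using der[OF s]
      by (auto intro!: derivative_eq_intros simp: algebra_simps)
    have "F' s + lam * F s \<le> 0" using le[OF s] by simp
    then show "(F' s + lam * F s) * exp (lam * s) \<le> 0" by (simp add: mult_nonpos_nonneg)
  qed (use t in auto)
  then have "F t * exp (lam * t) \<le> F 0" by (simp add: H_def)
  then have "F t * exp (lam * t) * exp (- lam * t) \<le> F 0 * exp (- lam * t)"
    by (rule mult_right_mono) simp
  then show ?thesis by (simp add: exp_minus field_simps)
qed

lemma bounded_drift:
  fixes f f' :: "real \<Rightarrow> 'a::real_inner"
  assumes cont: "continuous_on {0..} f"
    and der: "\<And>t. t > 0 \<Longrightarrow> (f has_vector_derivative f' t) (at t)"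
    and bnd: "\<And>t. t > 0 \<Longrightarrow> norm (f' t) \<le> K * exp (- C * t)"
    and C: "C > 0" and K: "K \<ge> 0" and t: "t \<ge> 0"
  shows "norm (f t - f 0) \<le> 1 + K / C"
proof -
  define u where "u = (\<lambda>t. (norm (f t - f 0))\<^sup>2 + 1)"
  have upos: "u s > 0" for s unfolding u_def by (simp add: add_nonneg_pos)
  define \<phi> where "\<phi> = (\<lambda>t. sqrt (u t) + (K / C) * exp (- C * t))"
  define \<phi>' where "\<phi>' = (\<lambda>t. inverse (sqrt (u t)) / 2 * (2 * ((f t - f 0) \<bullet> f' t)) + (K / C) * (exp (- C * t) * (- C)))"
  have "\<phi> t \<le> \<phi> 0"
  proof (rule nonincreasing_from_deriv[of \<phi> \<phi>'])
    show "continuous_on {0..} \<phi>" unfolding \<phi>_def u_def by (intro continuous_intros cont)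
    fix s :: real assume s: "s > 0"
    have du: "(u has_real_derivative 2 * ((f s - f 0) \<bullet> f' s)) (at s)"
    proof -
      have "((\<lambda>t. f t - f 0) has_vector_derivative f' s - 0) (at s)"
        by (intro has_vector_derivative_diff der s has_vector_derivative_const)
      then have "((\<lambda>t. (norm (f t - f 0))\<^sup>2) has_real_derivative 2 * ((f s - f 0) \<bullet> f' s)) (at s)"
        using vd_norm2 by fastforce
      then have "((\<lambda>t. (norm (f t - f 0))\<^sup>2 + 1) has_real_derivative 2 * ((f s - f 0) \<bullet> f' s) + 0) (at s)"
        by (rule DERIV_add) (rule DERIV_const)
      then show ?thesis unfolding u_def by simp
    qed
    have dsq: "((\<lambda>t. sqrt (u t)) has_real_derivative inverse (sqrt (u s)) / 2 * (2 * ((f s - f 0) \<bullet> f' s))) (at s)"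
      by (rule DERIV_chain2[OF DERIV_real_sqrt[OF upos] du])
    have de: "((\<lambda>t. (K / C) * exp (- C * t)) has_real_derivative (K / C) * (exp (- C * s) * (- C))) (at s)"
      by (auto intro!: derivative_eq_intros)
    show "(\<phi> has_real_derivative \<phi>' s) (at s)"
      unfolding \<phi>_def \<phi>'_def by (rule DERIV_add[OF dsq de])
    have sq: "norm (f s - f 0) \<le> sqrt (u s)"
      unfolding u_def by (rule real_le_rsqrt) simp
    have "(f s - f 0) \<bullet> f' s \<le> norm (f s - f 0) * norm (f' s)"
      by (rule Cauchy_Schwarz_ineq2[THEN abs_le_D1])
    also have "\<dots> \<le> sqrt (u s) * norm (f' s)" by (rule mult_right_mono[OF sq]) simp
    finally have "inverse (sqrt (u s)) / 2 * (2 * ((f s - f 0) \<bullet> f' s)) \<le> norm (f' s)"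
      using upos[of s] by (simp add: field_simps)
    also have "\<dots> \<le> K * exp (- C * s)" by (rule bnd[OF s])
    finally show "\<phi>' s \<le> 0" unfolding \<phi>'_def using C by (simp add: field_simps)
  qed (use t in auto)
  then have "sqrt (u t) \<le> 1 + K / C - (K / C) * exp (- C * t)"
    by (simp add: \<phi>_def u_def)
  also have "\<dots> \<le> 1 + K / C" using K C by simp
  finally show ?thesis
    using real_le_rsqrt[of "norm (f t - f 0)" "u t"] by (simp add: u_def)
qed

lemma tendsto_exp_bound:
  fixes B C :: real
  assumes "C > 0"
  shows "((\<lambda>t. B * exp (- C * t)) \<longlongrightarrow> 0) at_top"
  using assms by real_asymp




context csvc begin

lemma EP_le:
  assumes t: "t > 0" and r: "\<rho> \<ge> 0"
    and rb: "\<And>i k. i \<in> {1..N} \<Longrightarrow> k \<in> {1..N} \<Longrightarrow> \<rho> \<le> \<psi> (norm (q k t - q i t))"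
  shows "- 2 * \<kappa> * (\<Sum>i\<in>{1..N}. \<Sum>k\<in>{1..N}. \<psi> (norm (q k t - q i t)) * ((p k t - p i t) \<bullet> (GG k t - GG i t)))
         \<le> - (2 * \<kappa> * Mc * \<rho>) * sqs N (\<lambda>i. p i t)"
proof -
  have trm: "\<rho> * Mc * (norm (p k t - p i t))\<^sup>2 \<le> \<psi> (norm (q k t - q i t)) * ((p k t - p i t) \<bullet> (GG k t - GG i t))"
    if i: "i \<in> {1..N}" and k: "k \<in> {1..N}" for i k
  proof -
    have m: "mG * (norm (p k t - p i t))\<^sup>2 \<le> (p k t - p i t) \<bullet> (GG k t - GG i t)"
      by (rule mono_G[of _ P0M]) (use vbound[OF k] vbound[OF i] t mG_le in auto)
    have "Mc * (norm (p k t - p i t))\<^sup>2 \<le> mG * (norm (p k t - p i t))\<^sup>2"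
      by (rule mult_right_mono[OF Mc_le]) simp
    then have X: "Mc * (norm (p k t - p i t))\<^sup>2 \<le> (p k t - p i t) \<bullet> (GG k t - GG i t)" using m by linarith
    have X0: "0 \<le> (p k t - p i t) \<bullet> (GG k t - GG i t)"
      using X Mc_pos by (smt (verit) zero_le_power2 mult_nonneg_nonneg)
    have "\<rho> * (Mc * (norm (p k t - p i t))\<^sup>2) \<le> \<rho> * ((p k t - p i t) \<bullet> (GG k t - GG i t))"
      by (rule mult_left_mono[OF X r])
    also have "\<dots> \<le> \<psi> (norm (q k t - q i t)) * ((p k t - p i t) \<bullet> (GG k t - GG i t))"
      by (rule mult_right_mono[OF rb[OF i k] X0])
    finally show ?thesis by (simp add: mult.assoc)
  qed
  have "(\<Sum>i\<in>{1..N}. \<Sum>k\<in>{1..N}. \<rho> * Mc * (norm (p k t - p i t))\<^sup>2)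
      \<le> (\<Sum>i\<in>{1..N}. \<Sum>k\<in>{1..N}. \<psi> (norm (q k t - q i t)) * ((p k t - p i t) \<bullet> (GG k t - GG i t)))"
    by (intro sum_mono trm) auto
  moreover have "(\<Sum>i\<in>{1..N}. \<Sum>k\<in>{1..N}. \<rho> * Mc * (norm (p k t - p i t))\<^sup>2) = \<rho> * Mc * sqs N (\<lambda>i. p i t)"
    by (simp add: sqs_def sum_distrib_left norm_minus_commute)
  ultimately have "\<rho> * Mc * sqs N (\<lambda>i. p i t) \<le> (\<Sum>i\<in>{1..N}. \<Sum>k\<in>{1..N}. \<psi> (norm (q k t - q i t)) * ((p k t - p i t) \<bullet> (GG k t - GG i t)))"
    by simp
  then have "(2 * \<kappa>) * (\<rho> * Mc * sqs N (\<lambda>i. p i t)) \<le> (2 * \<kappa>) * (\<Sum>i\<in>{1..N}. \<Sum>k\<in>{1..N}. \<psi> (norm (q k t - q i t)) * ((p k t - p i t) \<bullet> (GG k t - GG i t)))"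
    by (rule mult_left_mono) (use kappa in simp)
  then show ?thesis by (simp add: algebra_simps)
qed

lemma part1_cb:
  assumes D: "\<forall>t\<ge>0. cfg_diam N (\<lambda>i. q i t) \<le> D"
  shows "\<exists>B C. B > 0 \<and> C > 0 \<and> (\<forall>t\<ge>0. cfg_diam N (\<lambda>i. p i t) \<le> B * exp (- C * t))"
proof -
  have D0: "D \<ge> 0" using D diam_nonneg[OF N, of "\<lambda>i. q i 0"] by force
  define \<rho> where "\<rho> = \<psi> D"
  have \<rho>: "\<rho> > 0" using psi_pos[OF D0] by (simp add: \<rho>_def)
  define lam where "lam = 2 * \<kappa> * Mc * \<rho>"
  have lam: "lam > 0" using kappa Mc_pos \<rho> by (simp add: lam_def)
  define E where "E = (\<lambda>t. sqs N (\<lambda>i. p i t))"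
  have decay: "E t \<le> E 0 * exp (- lam * t)" if t: "t \<ge> 0" for t
  proof (rule exp_decay[of E])
    show "continuous_on {0..} E" unfolding E_def by (rule sqs_cont_p)
    fix s :: real assume s: "s > 0"
    show "(E has_real_derivative (- 2 * \<kappa> * (\<Sum>i\<in>{1..N}. \<Sum>k\<in>{1..N}. \<psi> (norm (q k s - q i s)) * ((p k s - p i s) \<bullet> (GG k s - GG i s))))) (at s)"
      unfolding E_def by (rule EP_deriv[OF s])
    have "- 2 * \<kappa> * (\<Sum>i\<in>{1..N}. \<Sum>k\<in>{1..N}. \<psi> (norm (q k s - q i s)) * ((p k s - p i s) \<bullet> (GG k s - GG i s)))
         \<le> - (2 * \<kappa> * Mc * \<rho>) * sqs N (\<lambda>i. p i s)"
    proof (rule EP_le[OF s less_imp_le[OF \<rho>]])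
      fix i k assume i: "i \<in> {1..N}" and k: "k \<in> {1..N}"
      have "norm (q k s - q i s) \<le> cfg_diam N (\<lambda>i. q i s)" by (rule diam_ge[OF k i])
      also have "\<dots> \<le> D" using D s by simp
      finally show "\<rho> \<le> \<psi> (norm (q k s - q i s))" unfolding \<rho>_def by (rule psi_mono[OF norm_ge_zero])
    qed
    then show "- 2 * \<kappa> * (\<Sum>i\<in>{1..N}. \<Sum>k\<in>{1..N}. \<psi> (norm (q k s - q i s)) * ((p k s - p i s) \<bullet> (GG k s - GG i s)))
         \<le> - lam * E s" by (simp add: lam_def E_def)
  qed (use t in auto)
  define B where "B = sqrt (E 0) + 1"
  define C where "C = lam / 2"
  have B: "B > 0" unfolding B_def E_def using sqs_nonneg[of N "\<lambda>i. p i 0"] by (simp add: add_nonneg_pos)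
  have C: "C > 0" using lam by (simp add: C_def)
  have "cfg_diam N (\<lambda>i. p i t) \<le> B * exp (- C * t)" if t: "t \<ge> 0" for t
  proof -
    have E0: "E 0 \<ge> 0" unfolding E_def by (rule sqs_nonneg)
    have "cfg_diam N (\<lambda>i. p i t) \<le> sqrt (E t)" unfolding E_def by (rule diam_le_sqrt[OF N])
    also have "\<dots> \<le> sqrt (E 0 * exp (- lam * t))" using decay[OF t] by simp
    also have "\<dots> = sqrt (E 0) * exp (- C * t)"
    proof -
      have "exp (- lam * t) = (exp (- C * t))\<^sup>2"
        by (simp add: C_def power2_eq_square exp_add[symmetric])
      then show ?thesis by (simp add: real_sqrt_mult)
    qed
    also have "\<dots> \<le> B * exp (- C * t)" unfolding B_def by (rule mult_right_mono) auto
    finally show ?thesis .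
  qed
  then show ?thesis using B C by blast
qed

lemma part1_bc:
  assumes B: "B > 0" and C: "C > 0" and dec: "\<forall>t\<ge>0. cfg_diam N (\<lambda>i. p i t) \<le> B * exp (- C * t)"
  shows "\<exists>D. \<forall>t\<ge>0. cfg_diam N (\<lambda>i. q i t) \<le> D"
proof -
  define D where "D = cfg_diam N (\<lambda>i. q i 0) + (1 + MG * B / C)"
  have "cfg_diam N (\<lambda>i. q i t) \<le> D" if t: "t \<ge> 0" for t
  proof (rule diam_le[OF N])
    fix i j assume i: "i \<in> {1..N}" and j: "j \<in> {1..N}"
    have "norm ((q i t - q j t) - (q i 0 - q j 0)) \<le> 1 + (MG * B) / C"
    proof (rule bounded_drift[of "\<lambda>t. q i t - q j t" "\<lambda>t. GG i t - GG j t"])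
      show "continuous_on {0..} (\<lambda>t. q i t - q j t)" by (intro continuous_intros q_cont i j)
      fix s :: real assume s: "s > 0"
      show "((\<lambda>t. q i t - q j t) has_vector_derivative GG i s - GG j s) (at s)"
        by (intro has_vector_derivative_diff q_deriv i j s)
      have "norm (GG i s - GG j s) \<le> MG * norm (p i s - p j s)"
        by (rule lip_G[of _ P0M]) (use vbound[OF i] vbound[OF j] s MG_ge in auto)
      also have "\<dots> \<le> MG * cfg_diam N (\<lambda>i. p i s)"
        by (rule mult_left_mono[OF diam_ge[OF i j]]) (use MG_pos in simp)
      also have "\<dots> \<le> MG * (B * exp (- C * s))"
        by (rule mult_left_mono) (use dec s MG_pos in auto)
      finally show "norm (GG i s - GG j s) \<le> MG * B * exp (- C * s)" by (simp add: mult.assoc)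
    qed (use C B MG_pos t in auto)
    moreover have "norm (q i 0 - q j 0) \<le> cfg_diam N (\<lambda>i. q i 0)" by (rule diam_ge[OF i j])
    ultimately show "norm (q i t - q j t) \<le> D" unfolding D_def
      using norm_triangle_ineq[of "(q i t - q j t) - (q i 0 - q j 0)" "q i 0 - q j 0"] by simp
  qed
  then show ?thesis by blast
qed

lemma part1:
  "(flocking N q p = (\<exists>B C. B > 0 \<and> C > 0 \<and> (\<forall>t\<ge>0. cfg_diam N (\<lambda>i. p i t) \<le> B * exp (- C * t))))
   \<and> ((\<exists>B C. B > 0 \<and> C > 0 \<and> (\<forall>t\<ge>0. cfg_diam N (\<lambda>i. p i t) \<le> B * exp (- C * t)))
       = (\<exists>D. \<forall>t\<ge>0. cfg_diam N (\<lambda>i. q i t) \<le> D))"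
proof -
  have bc: "(\<exists>B C. B > 0 \<and> C > 0 \<and> (\<forall>t\<ge>0. cfg_diam N (\<lambda>i. p i t) \<le> B * exp (- C * t)))
       = (\<exists>D. \<forall>t\<ge>0. cfg_diam N (\<lambda>i. q i t) \<le> D)"
    using part1_bc part1_cb by blast
  have tend: "((\<lambda>t. cfg_diam N (\<lambda>i. p i t)) \<longlongrightarrow> 0) at_top"
    if "B > 0" "C > 0" "\<forall>t\<ge>0. cfg_diam N (\<lambda>i. p i t) \<le> B * exp (- C * t)" for B C
  proof (rule tendsto_sandwich[OF _ _ tendsto_const tendsto_exp_bound[OF that(2), of B]])
    show "\<forall>\<^sub>F t in at_top. 0 \<le> cfg_diam N (\<lambda>i. p i t)" by (simp add: diam_nonneg[OF N])
    show "\<forall>\<^sub>F t in at_top. cfg_diam N (\<lambda>i. p i t) \<le> B * exp (- C * t)"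
      unfolding eventually_at_top_linorder using that(3) by blast
  qed
  have "flocking N q p = (\<exists>D. \<forall>t\<ge>0. cfg_diam N (\<lambda>i. q i t) \<le> D)"
    unfolding flocking_def using bc tend by blast
  then show ?thesis using bc by simp
qed

end



lemma cs_double:
  fixes a b :: "nat \<Rightarrow> nat \<Rightarrow> real"
  assumes "finite I"
  shows "(\<Sum>i\<in>I. \<Sum>j\<in>I. a i j * b i j) \<le> sqrt (\<Sum>i\<in>I. \<Sum>j\<in>I. (a i j)\<^sup>2) * sqrt (\<Sum>i\<in>I. \<Sum>j\<in>I. (b i j)\<^sup>2)"
proof -
  have "(\<Sum>i\<in>I. \<Sum>j\<in>I. a i j * b i j) = (\<Sum>x\<in>I \<times> I. a (fst x) (snd x) * b (fst x) (snd x))"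
    by (simp add: sum.cartesian_product case_prod_beta)
  also have "\<dots> \<le> (\<Sum>x\<in>I \<times> I. \<bar>a (fst x) (snd x)\<bar> * \<bar>b (fst x) (snd x)\<bar>)"
    by (intro sum_mono) (simp add: abs_mult[symmetric])
  also have "\<dots> \<le> L2_set (\<lambda>x. a (fst x) (snd x)) (I \<times> I) * L2_set (\<lambda>x. b (fst x) (snd x)) (I \<times> I)"
    by (rule L2_set_mult_ineq)
  also have "\<dots> = sqrt (\<Sum>i\<in>I. \<Sum>j\<in>I. (a i j)\<^sup>2) * sqrt (\<Sum>i\<in>I. \<Sum>j\<in>I. (b i j)\<^sup>2)"
    by (simp add: L2_set_def sum.cartesian_product case_prod_beta)
  finally show ?thesis .
qed

lemma sqrt_add_sq_le: "0 \<le> a \<Longrightarrow> 0 \<le> e \<Longrightarrow> sqrt (a + e\<^sup>2) \<le> sqrt a + e"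
  by (rule real_le_lsqrt) (auto simp: power2_eq_square algebra_simps)

context csvc begin

definition "\<psi>e = (\<lambda>s. \<psi> (max s 0))"
definition "\<Psi> = (\<lambda>x. integral {-1..x} \<psi>e)"

lemma psi_cont: "continuous_on {0..} \<psi>"
proof -
  obtain L where "L-lipschitz_on {0..} \<psi>" using psi_lip by blast
  then show ?thesis by (rule lipschitz_on_continuous_on)
qed

lemma psie_cont: "continuous_on UNIV \<psi>e"
  unfolding \<psi>e_def
  by (rule continuous_on_compose2[OF psi_cont, of UNIV "\<lambda>s. max s 0"]) (auto intro!: continuous_intros)

lemma psie_eq: "s \<ge> 0 \<Longrightarrow> \<psi>e s = \<psi> s" by (simp add: \<psi>e_def)

lemma psie_nonneg: "\<psi>e s \<ge> 0" unfolding \<psi>e_def by (rule psi_nonneg) simp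

lemma psi_bound: "\<exists>Pb. \<forall>r\<ge>0. \<psi> r \<le> Pb"
proof -
  obtain a where "\<forall>x\<in>\<psi> ` {0..}. norm x \<le> a" using psi_bdd unfolding bounded_iff by blast
  then have "\<psi> r \<le> a" if "r \<ge> 0" for r
  proof -
    have "norm (\<psi> r) \<le> a" using \<open>\<forall>x\<in>\<psi> ` {0..}. norm x \<le> a\<close> that by simp
    then show ?thesis by simp
  qed
  then show ?thesis by blast
qed

lemma Psi_deriv: "x > -1 \<Longrightarrow> (\<Psi> has_real_derivative \<psi>e x) (at x)"
proof -
  assume x: "x > -1"
  have d: "(\<Psi> has_real_derivative \<psi>e x) (at x within {-1..x+1})"
    unfolding \<Psi>_def
  proof (rule integral_has_real_derivative)
    show "continuous_on {-1..x+1} \<psi>e" by (rule continuous_on_subset[OF psie_cont]) (rule subset_UNIV)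
    show "x \<in> {-1..x+1}" using x by simp
  qed
  have "x \<in> {-1<..<x+1}" using x by simp
  then have "x \<in> interior {-1..x+1}" by (simp only: interior_atLeastAtMost_real)
  then have eq: "at x within {-1..x+1} = at x" by (rule at_within_interior)
  show ?thesis using d unfolding eq .
qed

lemma Psi_cont: "continuous_on {0..} \<Psi>"
proof (rule continuous_at_imp_continuous_on, rule ballI)
  fix x :: real assume "x \<in> {0..}"
  then have "x > -1" by simp
  then show "isCont \<Psi> x" by (rule DERIV_isCont[OF Psi_deriv])
qed

lemma Psi_slope:
  assumes "0 \<le> a" "a \<le> b" "\<And>r. c \<le> \<psi>e r"
  shows "c * (b - a) \<le> \<Psi> b - \<Psi> a"
proof -
  have "(\<lambda>x. \<Psi> x - c*x) a \<le> (\<lambda>x. \<Psi> x - c*x) b"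
  proof (rule DERIV_nonneg_imp_increasing_open[OF \<open>a \<le> b\<close>])
    fix x assume x: "a < x" "x < b"
    have "((\<lambda>x. \<Psi> x - c * x) has_real_derivative (\<psi>e x - c)) (at x)"
      using Psi_deriv[of x] x assms(1) by (auto intro!: derivative_eq_intros)
    then show "\<exists>y. ((\<lambda>x. \<Psi> x - c * x) has_real_derivative y) (at x) \<and> 0 \<le> y"
      using assms(3)[of x] by auto
  next
    have "continuous_on {a..b} \<Psi>" using continuous_on_subset[OF Psi_cont, of "{a..b}"] assms(1) by auto
    then show "continuous_on {a..b} (\<lambda>x. \<Psi> x - c * x)"
      by (auto intro!: continuous_intros)
  qed
  then show ?thesis by (simp add: algebra_simps)
qed

lemma Psi_slope_upper:
  assumes "0 \<le> a" "a \<le> b" "\<And>r. \<psi>e r \<le> c"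
  shows "\<Psi> b - \<Psi> a \<le> c * (b - a)"
proof -
  have "(\<lambda>x. c*x - \<Psi> x) a \<le> (\<lambda>x. c*x - \<Psi> x) b"
  proof (rule DERIV_nonneg_imp_increasing_open[OF \<open>a \<le> b\<close>])
    fix x assume x: "a < x" "x < b"
    have "((\<lambda>x. c * x - \<Psi> x) has_real_derivative (c - \<psi>e x)) (at x)"
      using Psi_deriv[of x] x assms(1) by (auto intro!: derivative_eq_intros)
    then show "\<exists>y. ((\<lambda>x. c * x - \<Psi> x) has_real_derivative y) (at x) \<and> 0 \<le> y"
      using assms(3)[of x] by auto
  next
    have "continuous_on {a..b} \<Psi>" using continuous_on_subset[OF Psi_cont, of "{a..b}"] assms(1) by auto
    then show "continuous_on {a..b} (\<lambda>x. c * x - \<Psi> x)"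
      by (auto intro!: continuous_intros)
  qed
  then show ?thesis by (simp add: algebra_simps)
qed

lemma Psi_mono: "0 \<le> a \<Longrightarrow> a \<le> b \<Longrightarrow> \<Psi> a \<le> \<Psi> b"
  using Psi_slope[of a b 0] psie_nonneg by simp

end



context csvc begin

lemma psie_meas[measurable]: "\<psi>e \<in> borel_measurable borel"
  by (rule borel_measurable_continuous_onI[OF psie_cont])

lemma Psi_has_integral:
  assumes "0 \<le> a" "a \<le> b"
  shows "(\<psi>e has_integral (\<Psi> b - \<Psi> a)) {a..b}"
proof (rule fundamental_theorem_of_calculus[OF assms(2)])
  fix x assume "x \<in> {a..b}"
  then have "x > -1" using assms by simp
  then have "(\<Psi> has_vector_derivative \<psi>e x) (at x)"
    using Psi_deriv has_real_derivative_iff_has_vector_derivative by blast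
  then show "(\<Psi> has_vector_derivative \<psi>e x) (at x within {a..b})"
    by (rule has_vector_derivative_at_within)
qed

lemma nn_Psi:
  assumes a: "a \<ge> 0"
  shows "(\<integral>\<^sup>+ s\<in>{a..}. ennreal (\<psi> s) \<partial>lborel) = (SUP n::nat. ennreal (\<Psi> (a + real n) - \<Psi> a))"
proof -
  define f where "f = (\<lambda>n::nat. \<lambda>s. ennreal (\<psi>e s) * indicator {a..a + real n} s)"
  have pw: "ennreal (\<psi> s) * indicator {a..} s = (SUP n. f n s)" for s
  proof (cases "a \<le> s")
    case False
    then show ?thesis by (simp add: f_def indicator_def)
  next
    case True
    have e: "ennreal (\<psi> s) = ennreal (\<psi>e s)" using True a by (simp add: psie_eq)
    have "(SUP n. f n s) \<le> ennreal (\<psi>e s)"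
    proof (rule SUP_least)
      fix n show "f n s \<le> ennreal (\<psi>e s)" by (simp add: f_def indicator_def)
    qed
    moreover have "ennreal (\<psi>e s) \<le> (SUP n. f n s)"
    proof (rule SUP_upper2[of "nat \<lceil>s - a\<rceil>"])
      have "s \<le> a + real (nat \<lceil>s - a\<rceil>)" by linarith
      then show "ennreal (\<psi>e s) \<le> f (nat \<lceil>s - a\<rceil>) s" using True by (simp add: f_def indicator_def)
    qed simp
    ultimately show ?thesis using True e by (simp add: indicator_def)
  qed
  have "(\<integral>\<^sup>+ s\<in>{a..}. ennreal (\<psi> s) \<partial>lborel) = (\<integral>\<^sup>+ s. (SUP n. f n s) \<partial>lborel)"
    by (rule nn_integral_cong) (simp add: pw)
  also have "\<dots> = (SUP n. integral\<^sup>N lborel (f n))"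
  proof (rule nn_integral_monotone_convergence_SUP)
    show "incseq f"
      unfolding incseq_def le_fun_def f_def
      by (auto intro!: mult_left_mono simp: indicator_def)
    fix n show "f n \<in> borel_measurable lborel" unfolding f_def by measurable
  qed
  also have "\<dots> = (SUP n::nat. ennreal (\<Psi> (a + real n) - \<Psi> a))"
  proof (rule SUP_cong[OF refl])
    fix n :: nat
    show "integral\<^sup>N lborel (f n) = ennreal (\<Psi> (a + real n) - \<Psi> a)"
      unfolding f_def
      by (rule nn_integral_has_integral_lebesgue'[OF psie_nonneg Psi_has_integral]) (use a in auto)
  qed
  finally show ?thesis .
qed

end



context csvc begin

lemma EQ_deriv_le:
  assumes t: "t > 0"
  shows "(\<Sum>i\<in>{1..N}. \<Sum>j\<in>{1..N}. 2 * ((q i t - q j t) \<bullet> (GG i t - GG j t)))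
         \<le> 2 * MG * (sqrt (sqs N (\<lambda>i. q i t)) * sqrt (sqs N (\<lambda>i. p i t)))"
proof -
  have "(\<Sum>i\<in>{1..N}. \<Sum>j\<in>{1..N}. 2 * ((q i t - q j t) \<bullet> (GG i t - GG j t)))
     \<le> (\<Sum>i\<in>{1..N}. \<Sum>j\<in>{1..N}. 2 * MG * (norm (q i t - q j t) * norm (p i t - p j t)))"
  proof (intro sum_mono)
    fix i j assume i: "i \<in> {1..N}" and j: "j \<in> {1..N}"
    have "(q i t - q j t) \<bullet> (GG i t - GG j t) \<le> norm (q i t - q j t) * norm (GG i t - GG j t)"
      by (rule Cauchy_Schwarz_ineq2[THEN abs_le_D1])
    also have "\<dots> \<le> norm (q i t - q j t) * (MG * norm (p i t - p j t))"
    proof (rule mult_left_mono)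
      show "norm (GG i t - GG j t) \<le> MG * norm (p i t - p j t)"
        by (rule lip_G[of _ P0M]) (use vbound[OF i] vbound[OF j] t MG_ge in auto)
    qed simp
    finally show "2 * ((q i t - q j t) \<bullet> (GG i t - GG j t)) \<le> 2 * MG * (norm (q i t - q j t) * norm (p i t - p j t))"
      by (simp add: algebra_simps)
  qed
  also have "\<dots> = 2 * MG * (\<Sum>i\<in>{1..N}. \<Sum>j\<in>{1..N}. norm (q i t - q j t) * norm (p i t - p j t))"
    by (simp add: sum_distrib_left)
  also have "\<dots> \<le> 2 * MG * (sqrt (sqs N (\<lambda>i. q i t)) * sqrt (sqs N (\<lambda>i. p i t)))"
  proof (rule mult_left_mono)
    show "(\<Sum>i\<in>{1..N}. \<Sum>j\<in>{1..N}. norm (q i t - q j t) * norm (p i t - p j t))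
        \<le> sqrt (sqs N (\<lambda>i. q i t)) * sqrt (sqs N (\<lambda>i. p i t))"
      unfolding sqs_def by (rule cs_double) simp
    show "0 \<le> 2 * MG" using MG_pos by simp
  qed
  finally show ?thesis .
qed

lemma L_deriv_bound:
  assumes s: "s > 0" and eps: "\<epsilon> > 0" and Pb: "\<And>r. r \<ge> 0 \<Longrightarrow> \<psi> r \<le> Pb"
  defines "E \<equiv> sqs N (\<lambda>i. p i s)" and "Y \<equiv> sqs N (\<lambda>i. q i s)"
  defines "DE \<equiv> - 2 * \<kappa> * (\<Sum>i\<in>{1..N}. \<Sum>k\<in>{1..N}. \<psi> (norm (q k s - q i s)) * ((p k s - p i s) \<bullet> (GG k s - GG i s)))"
  defines "DY \<equiv> (\<Sum>i\<in>{1..N}. \<Sum>j\<in>{1..N}. 2 * ((q i s - q j s) \<bullet> (GG i s - GG j s)))"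
  shows "inverse (sqrt (E + \<epsilon>\<^sup>2)) / 2 * DE
         + (Mc * \<kappa> / MG) * (\<psi>e (sqrt (Y + \<epsilon>\<^sup>2)) * (inverse (sqrt (Y + \<epsilon>\<^sup>2)) / 2 * DY))
         - \<kappa> * Mc * Pb * \<epsilon> \<le> 0"
proof -
  define ve where "ve = sqrt (E + \<epsilon>\<^sup>2)"
  define xe where "xe = sqrt (Y + \<epsilon>\<^sup>2)"
  define \<rho> where "\<rho> = \<psi> xe"
  define c where "c = Mc * \<kappa> / MG"
  define A where "A = \<kappa> * Mc * \<rho>"
  have E0: "E \<ge> 0" unfolding E_def by (rule sqs_nonneg)
  have Y0: "Y \<ge> 0" unfolding Y_def by (rule sqs_nonneg)
  have ve_eps: "\<epsilon> \<le> ve" unfolding ve_def by (rule real_le_rsqrt) (use E0 in simp)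
  have ve_pos: "ve > 0" using ve_eps eps by simp
  have vesq: "ve\<^sup>2 = E + \<epsilon>\<^sup>2" unfolding ve_def using E0 by simp
  have sE: "sqrt E \<le> ve" unfolding ve_def by (rule real_sqrt_le_mono) simp
  have sY: "sqrt Y \<le> xe" unfolding xe_def by (rule real_sqrt_le_mono) simp
  have xe_pos: "xe > 0" unfolding xe_def using eps Y0 by (simp add: add_nonneg_pos)
  have xe0: "xe \<ge> 0" using xe_pos by simp
  have rho0: "\<rho> \<ge> 0" unfolding \<rho>_def by (rule psi_nonneg[OF xe0])
  have rhoPb: "\<rho> \<le> Pb" unfolding \<rho>_def by (rule Pb[OF xe0])
  have psie_xe: "\<psi>e xe = \<rho>" unfolding \<rho>_def by (rule psie_eq[OF xe0])
  have c0: "c \<ge> 0" unfolding c_def using Mc_pos kappa MG_pos by simp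
  have A0: "A \<ge> 0" unfolding A_def using kappa Mc_pos rho0 by simp
  have hDE: "DE \<le> - (2 * \<kappa> * Mc * \<rho>) * E"
    unfolding DE_def E_def
  proof (rule EP_le[OF s rho0])
    fix i k assume i: "i \<in> {1..N}" and k: "k \<in> {1..N}"
    have "norm (q k s - q i s) \<le> sqrt Y" unfolding Y_def by (rule term_le_sqrt_sqs[OF k i])
    also have "\<dots> \<le> xe" by (rule sY)
    finally show "\<rho> \<le> \<psi> (norm (q k s - q i s))" unfolding \<rho>_def by (rule psi_mono[OF norm_ge_zero])
  qed
  have hDY: "DY \<le> 2 * MG * (sqrt Y * sqrt E)"
    unfolding DY_def Y_def E_def by (rule EQ_deriv_le[OF s])
  have f1: "inverse ve / 2 * DE \<le> - (A * ve) + A * \<epsilon>"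
  proof -
    have "inverse ve / 2 * DE \<le> inverse ve / 2 * (- (2 * \<kappa> * Mc * \<rho>) * E)"
      by (rule mult_left_mono[OF hDE]) (use ve_pos in simp)
    also have "\<dots> = - A * (E / ve)" by (simp add: A_def field_simps)
    also have "\<dots> \<le> - A * (ve - \<epsilon>)"
    proof -
      have "ve - \<epsilon> \<le> E / ve"
      proof -
        have "(ve - \<epsilon>) * ve \<le> E"
          using vesq ve_eps eps by (simp add: power2_eq_square algebra_simps)
        then show ?thesis using ve_pos by (simp add: field_simps)
      qed
      then have "A * (ve - \<epsilon>) \<le> A * (E / ve)" by (rule mult_left_mono[OF _ A0])
      then show ?thesis by linarith
    qed
    finally show ?thesis by (simp add: algebra_simps)
  qed
  have f2: "c * (\<rho> * (inverse xe / 2 * DY)) \<le> A * sqrt E"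
  proof -
    have "inverse xe / 2 * DY \<le> inverse xe / 2 * (2 * MG * (sqrt Y * sqrt E))"
      by (rule mult_left_mono[OF hDY]) (use xe_pos in simp)
    also have "\<dots> = MG * sqrt E * (sqrt Y / xe)" by (simp add: field_simps)
    also have "\<dots> \<le> MG * sqrt E * 1"
    proof (rule mult_left_mono)
      show "sqrt Y / xe \<le> 1" using sY xe_pos by simp
      show "0 \<le> MG * sqrt E" using MG_pos E0 by simp
    qed
    finally have T2: "inverse xe / 2 * DY \<le> MG * sqrt E" by simp
    have "c * (\<rho> * (inverse xe / 2 * DY)) \<le> c * (\<rho> * (MG * sqrt E))"
      by (intro mult_left_mono T2 rho0 c0)
    also have "\<dots> = A * sqrt E" unfolding c_def A_def using MG_pos by (simp add: field_simps)
    finally show ?thesis .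
  qed
  have f3: "A * sqrt E \<le> A * ve" by (rule mult_left_mono[OF sE A0])
  have f4: "A * \<epsilon> \<le> \<kappa> * Mc * Pb * \<epsilon>"
    unfolding A_def using kappa Mc_pos eps rhoPb by (simp add: mult_left_mono mult_right_mono)
  show ?thesis
    unfolding ve_def[symmetric] xe_def[symmetric] c_def[symmetric] psie_xe
    using f1 f2 f3 f4 by linarith
qed

end



context csvc begin

lemma part2_core:
  assumes RX: "R \<ge> sqrt (sqs N (\<lambda>i. q i 0))"
    and cond: "sqrt (sqs N (\<lambda>i. p i 0)) < (Mc * \<kappa> / MG) * (\<Psi> R - \<Psi> (sqrt (sqs N (\<lambda>i. q i 0))))"
  shows "\<exists>D. \<forall>t\<ge>0. cfg_diam N (\<lambda>i. q i t) \<le> D"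
proof -
  define X0 where "X0 = sqrt (sqs N (\<lambda>i. q i 0))"
  define V0 where "V0 = sqrt (sqs N (\<lambda>i. p i 0))"
  define c where "c = Mc * \<kappa> / MG"
  have c0: "c \<ge> 0" unfolding c_def using Mc_pos kappa MG_pos by simp
  have X00: "X0 \<ge> 0" unfolding X0_def by (simp add: sqs_nonneg)
  obtain Pb where Pb: "\<And>r. r \<ge> 0 \<Longrightarrow> \<psi> r \<le> Pb" using psi_bound by blast
  have Pb0: "Pb \<ge> 0" using Pb[of 0] psi_pos[of 0] by simp
  have psiePb: "\<psi>e r \<le> Pb" for r unfolding \<psi>e_def by (rule Pb) simp
  define \<eta> where "\<eta> = c * (\<Psi> R - \<Psi> X0) - V0"
  have eta: "\<eta> > 0" using cond unfolding \<eta>_def c_def X0_def V0_def by simp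
  define K where "K = \<kappa> * Mc * Pb"
  have K0: "K \<ge> 0" unfolding K_def using kappa Mc_pos Pb0 by simp
  have "cfg_diam N (\<lambda>i. q i t) \<le> R" if t: "t \<ge> 0" for t
  proof -
    have "sqrt (sqs N (\<lambda>i. q i t)) \<le> R"
    proof (rule ccontr)
      assume "\<not> sqrt (sqs N (\<lambda>i. q i t)) \<le> R"
      then have big: "R < sqrt (sqs N (\<lambda>i. q i t))" by simp
      define den where "den = 3 * (1 + c * Pb + K * t)"
      have den: "den > 0" unfolding den_def using c0 Pb0 K0 t by (simp add: add_pos_nonneg)
      define \<epsilon> where "\<epsilon> = \<eta> / den"
      have eps: "\<epsilon> > 0" unfolding \<epsilon>_def using eta den by simp
      have eps_eq: "\<epsilon> * (1 + c * Pb + K * t) = \<eta> / 3" unfolding \<epsilon>_def den_def using den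
        by (simp add: field_simps den_def)
      define E where "E = (\<lambda>s. sqs N (\<lambda>i. p i s))"
      define Y where "Y = (\<lambda>s. sqs N (\<lambda>i. q i s))"
      define DE where "DE = (\<lambda>s. - 2 * \<kappa> * (\<Sum>i\<in>{1..N}. \<Sum>k\<in>{1..N}. \<psi> (norm (q k s - q i s)) * ((p k s - p i s) \<bullet> (GG k s - GG i s))))"
      define DY where "DY = (\<lambda>s. (\<Sum>i\<in>{1..N}. \<Sum>j\<in>{1..N}. 2 * ((q i s - q j s) \<bullet> (GG i s - GG j s))))"
      define L where "L = (\<lambda>s. sqrt (E s + \<epsilon>\<^sup>2) + c * \<Psi> (sqrt (Y s + \<epsilon>\<^sup>2)) - K * \<epsilon> * s)"
      define L' where "L' = (\<lambda>s. inverse (sqrt (E s + \<epsilon>\<^sup>2)) / 2 * (DE s + 0)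
         + c * (\<psi>e (sqrt (Y s + \<epsilon>\<^sup>2)) * (inverse (sqrt (Y s + \<epsilon>\<^sup>2)) / 2 * (DY s + 0))) - K * \<epsilon> * 1)"
      have E0: "E s \<ge> 0" for s unfolding E_def by (rule sqs_nonneg)
      have Y0: "Y s \<ge> 0" for s unfolding Y_def by (rule sqs_nonneg)
      have "L t \<le> L 0"
      proof (rule nonincreasing_from_deriv[of L L'])
        have cE: "continuous_on {0..} E" unfolding E_def by (rule sqs_cont_p)
        have cY: "continuous_on {0..} Y" unfolding Y_def by (rule sqs_cont_q)
        have cX: "continuous_on {0..} (\<lambda>s. sqrt (Y s + \<epsilon>\<^sup>2))" by (intro continuous_intros cY)
        have cP: "continuous_on {0..} (\<lambda>s. \<Psi> (sqrt (Y s + \<epsilon>\<^sup>2)))"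
          by (rule continuous_on_compose2[OF Psi_cont cX]) (use Y0 in \<open>auto intro: add_nonneg_nonneg\<close>)
        show "continuous_on {0..} L" unfolding L_def by (intro continuous_intros cE cP)
      next
        fix s :: real assume s: "s > 0"
        have dE: "((\<lambda>s. E s + \<epsilon>\<^sup>2) has_real_derivative DE s + 0) (at s)"
          unfolding E_def DE_def by (rule DERIV_add[OF EP_deriv[OF s] DERIV_const])
        have dY: "((\<lambda>s. Y s + \<epsilon>\<^sup>2) has_real_derivative DY s + 0) (at s)"
          unfolding Y_def DY_def by (rule DERIV_add[OF EQ_deriv[OF s] DERIV_const])
        have pE: "E s + \<epsilon>\<^sup>2 > 0" using E0[of s] eps by (simp add: add_nonneg_pos)
        have pY: "Y s + \<epsilon>\<^sup>2 > 0" using Y0[of s] eps by (simp add: add_nonneg_pos)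
        have dV: "((\<lambda>s. sqrt (E s + \<epsilon>\<^sup>2)) has_real_derivative inverse (sqrt (E s + \<epsilon>\<^sup>2)) / 2 * (DE s + 0)) (at s)"
          by (rule DERIV_chain2[OF DERIV_real_sqrt[OF pE] dE])
        have dX: "((\<lambda>s. sqrt (Y s + \<epsilon>\<^sup>2)) has_real_derivative inverse (sqrt (Y s + \<epsilon>\<^sup>2)) / 2 * (DY s + 0)) (at s)"
          by (rule DERIV_chain2[OF DERIV_real_sqrt[OF pY] dY])
        have gt: "sqrt (Y s + \<epsilon>\<^sup>2) > -1" using real_sqrt_ge_zero[of "Y s + \<epsilon>\<^sup>2"] pY by linarith
        have dP: "((\<lambda>s. \<Psi> (sqrt (Y s + \<epsilon>\<^sup>2))) has_real_derivative \<psi>e (sqrt (Y s + \<epsilon>\<^sup>2)) * (inverse (sqrt (Y s + \<epsilon>\<^sup>2)) / 2 * (DY s + 0))) (at s)"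
          by (rule DERIV_chain2[OF Psi_deriv[OF gt] dX])
        have dcP: "((\<lambda>s. c * \<Psi> (sqrt (Y s + \<epsilon>\<^sup>2))) has_real_derivative c * (\<psi>e (sqrt (Y s + \<epsilon>\<^sup>2)) * (inverse (sqrt (Y s + \<epsilon>\<^sup>2)) / 2 * (DY s + 0)))) (at s)"
          by (rule DERIV_cmult[OF dP])
        have dl: "((\<lambda>s. K * \<epsilon> * s) has_real_derivative K * \<epsilon> * 1) (at s)"
          by (rule DERIV_cmult[OF DERIV_ident])
        show "(L has_real_derivative L' s) (at s)"
          unfolding L_def L'_def by (rule DERIV_diff[OF DERIV_add[OF dV dcP] dl])
        have "inverse (sqrt (E s + \<epsilon>\<^sup>2)) / 2 * DE s
         + (Mc * \<kappa> / MG) * (\<psi>e (sqrt (Y s + \<epsilon>\<^sup>2)) * (inverse (sqrt (Y s + \<epsilon>\<^sup>2)) / 2 * DY s))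
         - \<kappa> * Mc * Pb * \<epsilon> \<le> 0"
          unfolding E_def Y_def DE_def DY_def by (rule L_deriv_bound[OF s eps Pb])
        then show "L' s \<le> 0" unfolding L'_def c_def K_def by simp
      qed (use t in auto)
      have L0: "L 0 \<le> V0 + \<epsilon> + c * (\<Psi> X0 + Pb * \<epsilon>)"
      proof -
        have v: "sqrt (E 0 + \<epsilon>\<^sup>2) \<le> V0 + \<epsilon>" unfolding V0_def E_def
          by (rule sqrt_add_sq_le) (use eps in \<open>auto simp: sqs_nonneg\<close>)
        have x: "sqrt (Y 0 + \<epsilon>\<^sup>2) \<le> X0 + \<epsilon>" unfolding X0_def Y_def
          by (rule sqrt_add_sq_le) (use eps in \<open>auto simp: sqs_nonneg\<close>)
        have "\<Psi> (sqrt (Y 0 + \<epsilon>\<^sup>2)) \<le> \<Psi> (X0 + \<epsilon>)" by (rule Psi_mono[OF _ x]) (use Y0[of 0] in simp)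
        also have "\<dots> \<le> \<Psi> X0 + Pb * \<epsilon>"
          using Psi_slope_upper[of X0 "X0 + \<epsilon>" Pb] X00 eps psiePb by simp
        finally have "c * \<Psi> (sqrt (Y 0 + \<epsilon>\<^sup>2)) \<le> c * (\<Psi> X0 + Pb * \<epsilon>)" by (rule mult_left_mono[OF _ c0])
        then show ?thesis using v unfolding L_def by simp
      qed
      have Lt: "c * \<Psi> R - K * \<epsilon> * t \<le> L t"
      proof -
        have "sqrt (Y t) \<le> sqrt (Y t + \<epsilon>\<^sup>2)" by (rule real_sqrt_le_mono) simp
        then have "R \<le> sqrt (Y t + \<epsilon>\<^sup>2)" using big unfolding Y_def by linarith
        then have "\<Psi> R \<le> \<Psi> (sqrt (Y t + \<epsilon>\<^sup>2))" by (rule Psi_mono[rotated]) (use RX X00 X0_def in linarith)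
        then have "c * \<Psi> R \<le> c * \<Psi> (sqrt (Y t + \<epsilon>\<^sup>2))" by (rule mult_left_mono[OF _ c0])
        moreover have "0 \<le> sqrt (E t + \<epsilon>\<^sup>2)" using E0[of t] by simp
        ultimately have "c * \<Psi> R \<le> sqrt (E t + \<epsilon>\<^sup>2) + c * \<Psi> (sqrt (Y t + \<epsilon>\<^sup>2))" by linarith
        then show ?thesis unfolding L_def by simp
      qed
      have "c * \<Psi> R - K * \<epsilon> * t \<le> V0 + \<epsilon> + c * (\<Psi> X0 + Pb * \<epsilon>)"
        using Lt \<open>L t \<le> L 0\<close> L0 by linarith
      then have "\<eta> \<le> \<epsilon> * (1 + c * Pb + K * t)" unfolding \<eta>_def by (simp add: algebra_simps)
      then show False using eps_eq eta by simp
    qed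
    then show ?thesis using diam_le_sqrt[OF N, of "\<lambda>i. q i t"] by simp
  qed
  then show ?thesis by blast
qed

end



lemma sqs_cong: "(\<And>i. i \<in> {1..N} \<Longrightarrow> x i = y i) \<Longrightarrow> sqs N x = sqs N y"
  unfolding sqs_def by (intro sum.cong refl) auto

context csvc begin

lemma flock_iff_bdd: "flocking N q p = (\<exists>D. \<forall>t\<ge>0. cfg_diam N (\<lambda>i. q i t) \<le> D)"
  using part1 by blast

lemma X0_eq: "cfg_norm N q0 = sqrt (sqs N (\<lambda>i. q i 0))"
proof -
  have "sqs N q0 = sqs N (\<lambda>i. q i 0)" by (rule sqs_cong) (simp add: q_init)
  then show ?thesis unfolding cfg_norm_sqs by simp
qed

lemma V0_eq: "cfg_norm N p0 = sqrt (sqs N (\<lambda>i. p i 0))"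
proof -
  have "sqs N p0 = sqs N (\<lambda>i. p i 0)" by (rule sqs_cong) (simp add: p_init)
  then show ?thesis unfolding cfg_norm_sqs by simp
qed

lemma part2:
  assumes H: "ennreal (cfg_norm N p0) < ennreal (Mc * \<kappa> / MG) * (\<integral>\<^sup>+ s\<in>{cfg_norm N q0..}. ennreal (\<psi> s) \<partial>lborel)"
  shows "flocking N q p"
proof -
  define X0 where "X0 = sqrt (sqs N (\<lambda>i. q i 0))"
  define V0 where "V0 = sqrt (sqs N (\<lambda>i. p i 0))"
  define c where "c = Mc * \<kappa> / MG"
  have c0: "c \<ge> 0" unfolding c_def using Mc_pos kappa MG_pos by simp
  have X00: "X0 \<ge> 0" unfolding X0_def by (simp add: sqs_nonneg)
  have V00: "V0 \<ge> 0" unfolding V0_def by (simp add: sqs_nonneg)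
  have eq: "(\<integral>\<^sup>+ s\<in>{X0..}. ennreal (\<psi> s) \<partial>lborel) = (SUP n::nat. ennreal (\<Psi> (X0 + real n) - \<Psi> X0))"
    by (rule nn_Psi[OF X00])
  have "ennreal V0 < ennreal c * (\<integral>\<^sup>+ s\<in>{X0..}. ennreal (\<psi> s) \<partial>lborel)"
    using H unfolding X0_eq V0_eq X0_def[symmetric] V0_def[symmetric] c_def[symmetric] .
  also have "\<dots> = ennreal c * (SUP n::nat. ennreal (\<Psi> (X0 + real n) - \<Psi> X0))" unfolding eq ..
  also have "\<dots> = (SUP n::nat. ennreal (c * (\<Psi> (X0 + real n) - \<Psi> X0)))"
    by (simp add: SUP_mult_left_ennreal ennreal_mult'[OF c0])
  finally obtain n :: nat where "ennreal V0 < ennreal (c * (\<Psi> (X0 + real n) - \<Psi> X0))"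
    by (auto simp: less_SUP_iff)
  then have "V0 < c * (\<Psi> (X0 + real n) - \<Psi> X0)" using V00 by (simp add: ennreal_less_iff)
  then have "\<exists>D. \<forall>t\<ge>0. cfg_diam N (\<lambda>i. q i t) \<le> D"
    by (intro part2_core[of "X0 + real n"]) (auto simp: X0_def V0_def c_def)
  then show ?thesis using flock_iff_bdd by simp
qed

lemma part3:
  assumes H: "(\<integral>\<^sup>+ s\<in>{0<..}. ennreal (\<psi> s) \<partial>lborel) = \<infinity>"
  shows "flocking N q p"
proof -
  define X0 where "X0 = sqrt (sqs N (\<lambda>i. q i 0))"
  define V0 where "V0 = sqrt (sqs N (\<lambda>i. p i 0))"
  define c where "c = Mc * \<kappa> / MG"
  have c0: "c > 0" unfolding c_def using Mc_pos kappa MG_pos by simp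
  have X00: "X0 \<ge> 0" unfolding X0_def by (simp add: sqs_nonneg)
  have V00: "V0 \<ge> 0" unfolding V0_def by (simp add: sqs_nonneg)
  obtain Pb where Pb: "\<And>r. r \<ge> 0 \<Longrightarrow> \<psi> r \<le> Pb" using psi_bound by blast
  have Pb0: "Pb \<ge> 0" using Pb[of 0] psi_pos[of 0] by simp
  have psiePb: "\<psi>e r \<le> Pb" for r unfolding \<psi>e_def by (rule Pb) simp
  have "(\<integral>\<^sup>+ s\<in>{0<..}. ennreal (\<psi> s) \<partial>lborel) \<le> (\<integral>\<^sup>+ s\<in>{0..}. ennreal (\<psi> s) \<partial>lborel)"
    by (rule nn_integral_mono) (auto simp: indicator_def)
  then have inf: "(SUP n::nat. ennreal (\<Psi> (0 + real n) - \<Psi> 0)) = \<infinity>"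
    using H unfolding nn_Psi[of 0, simplified] by (simp add: top_unique)
  define T where "T = V0 / c + Pb * X0 + 1"
  have T0: "T \<ge> 0" unfolding T_def using V00 c0 Pb0 X00 by simp
  have "ennreal T < (SUP n::nat. ennreal (\<Psi> (0 + real n) - \<Psi> 0))" by (subst inf) simp
  then obtain n :: nat where "ennreal T < ennreal (\<Psi> (0 + real n) - \<Psi> 0)"
    by (auto simp: less_SUP_iff)
  then have Tn: "T < \<Psi> (real n) - \<Psi> 0" using T0 by (simp add: ennreal_less_iff)
  define R where "R = max (real n) X0"
  have RX: "R \<ge> X0" unfolding R_def by simp
  have "\<Psi> (real n) \<le> \<Psi> R" by (rule Psi_mono) (auto simp: R_def)
  moreover have "\<Psi> X0 - \<Psi> 0 \<le> Pb * (X0 - 0)" by (rule Psi_slope_upper[OF _ X00 psiePb]) simp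
  ultimately have "V0 / c + 1 < \<Psi> R - \<Psi> X0" using Tn unfolding T_def by simp
  then have "c * (V0 / c + 1) < c * (\<Psi> R - \<Psi> X0)" using c0 by simp
  moreover have "c * (V0 / c + 1) = V0 + c" using c0 by (simp add: field_simps)
  ultimately have "V0 < c * (\<Psi> R - \<Psi> X0)" using c0 by linarith
  then have "\<exists>D. \<forall>t\<ge>0. cfg_diam N (\<lambda>i. q i t) \<le> D"
    by (intro part2_core[of R]) (use RX in \<open>auto simp: X0_def V0_def c_def\<close>)
  then show ?thesis using flock_iff_bdd by simp
qed

lemma main:
  shows
   "(flocking N q p
       = (\<exists>B C. B > 0 \<and> C > 0 \<and> (\<forall>t\<ge>0. cfg_diam N (\<lambda>i. p i t) \<le> B * exp (- C * t))))
    \<and> ((\<exists>B C. B > 0 \<and> C > 0 \<and> (\<forall>t\<ge>0. cfg_diam N (\<lambda>i. p i t) \<le> B * exp (- C * t)))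
       = (\<exists>D. \<forall>t\<ge>0. cfg_diam N (\<lambda>i. q i t) \<le> D))
    \<and> (let P0M = Max ((\<lambda>i. norm (p0 i)) ` {1..N});
           MG = (SUP r\<in>{0..P0M}. g' r);
           mG = (INF r\<in>{0..P0M}. g' r);
           \<M> = min mG (mG\<^sup>2 / MG)
       in ennreal (cfg_norm N p0)
            < ennreal (\<M> * \<kappa> / MG) * (\<integral>\<^sup>+ s\<in>{cfg_norm N q0..}. ennreal (\<psi> s) \<partial>lborel)
          \<longrightarrow> flocking N q p)
    \<and> ((\<integral>\<^sup>+ s\<in>{0<..}. ennreal (\<psi> s) \<partial>lborel) = \<infinity> \<longrightarrow> flocking N q p)"
proof -
  have p2: "ennreal (cfg_norm N p0) < ennreal (Mc * \<kappa> / MG) * (\<integral>\<^sup>+ s\<in>{cfg_norm N q0..}. ennreal (\<psi> s) \<partial>lborel)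
      \<longrightarrow> flocking N q p" using part2 by blast
  show ?thesis
    unfolding Let_def
    using part1 p2[unfolded Mc_def mG_def MG_def P0M_def] part3 by blast
qed

end

theorem theorem2p1:
  fixes N :: nat and \<kappa> :: real
    and g g' \<psi> :: "real \<Rightarrow> real"
    and q0 p0 :: "nat \<Rightarrow> 'a::euclidean_space"
    and q p :: "nat \<Rightarrow> real \<Rightarrow> 'a"
  assumes N: "N \<ge> 1" and kappa: "\<kappa> > 0"
    and g_deriv: "\<And>r. r \<ge> 0 \<Longrightarrow> (g has_real_derivative g' r) (at r within {0..})"
    and g'_cont: "continuous_on {0..} g'"
    and g0: "g 0 = 0"
    and g'_bounds: "\<And>b. b \<ge> 0 \<Longrightarrow> \<exists>m M. 0 < m \<and> (\<forall>r\<in>{0..b}. m \<le> g' r \<and> g' r \<le> M)"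
    and g_cvx: "convex_on {0<..} g \<or> concave_on {0<..} g"
    and psi_pos: "\<And>r. r \<ge> 0 \<Longrightarrow> \<psi> r > 0"
    and psi_bdd: "bounded (\<psi> ` {0..})"
    and psi_lip: "\<exists>L. L-lipschitz_on {0..} \<psi>"
    and psi_noninc: "\<And>r s. r \<ge> 0 \<Longrightarrow> s \<ge> 0 \<Longrightarrow> (\<psi> r - \<psi> s) * (r - s) \<le> 0"
    and sol: "CSVC_solution N \<kappa> g \<psi> q0 p0 q p"
  shows
   "(flocking N q p
       = (\<exists>B C. B > 0 \<and> C > 0 \<and> (\<forall>t\<ge>0. cfg_diam N (\<lambda>i. p i t) \<le> B * exp (- C * t))))
    \<and> ((\<exists>B C. B > 0 \<and> C > 0 \<and> (\<forall>t\<ge>0. cfg_diam N (\<lambda>i. p i t) \<le> B * exp (- C * t)))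
       = (\<exists>D. \<forall>t\<ge>0. cfg_diam N (\<lambda>i. q i t) \<le> D))
    \<and> (let P0M = Max ((\<lambda>i. norm (p0 i)) ` {1..N});
           MG = (SUP r\<in>{0..P0M}. g' r);
           mG = (INF r\<in>{0..P0M}. g' r);
           \<M> = min mG (mG\<^sup>2 / MG)
       in ennreal (cfg_norm N p0)
            < ennreal (\<M> * \<kappa> / MG) * (\<integral>\<^sup>+ s\<in>{cfg_norm N q0..}. ennreal (\<psi> s) \<partial>lborel)
          \<longrightarrow> flocking N q p)
    \<and> ((\<integral>\<^sup>+ s\<in>{0<..}. ennreal (\<psi> s) \<partial>lborel) = \<infinity> \<longrightarrow> flocking N q p)"
proof -
  interpret csvc N \<kappa> g g' \<psi> q0 p0 q p
    by (rule csvc.intro) (fact N kappa g_deriv g0 g'_bounds psi_pos psi_bdd psi_lip psi_noninc sol)+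
  show ?thesis by (rule main)
qed



end
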